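(* Let $\delta\in(0,1)$ and $s>1$. Consider any algorithm following the per-arm adaptive phase scheme described in the context, with an arbitrary sampling rule, and stopping according to the non-private GLR stopping rule with thresholds $c_k$ defined in the context. Then for every bandit instance with $1$-sub-Gaussian arm distributions and a unique best arm $a^\star$, $\mathbb{P}(\tau^{\mathrm{NP}}_\delta<\infty,\ \hat a\ne a^\star)\le\delta$.
   Context: $K$ arms with 1-sub-Gaussian distributions, means $\mu_a$, unique $a^\star=\arg\max_a\mu_a$. At round $n$ the algorithm pulls $I_n$ (any rule depending on the past and internal randomness) and observes $X_n\sim\nu_{I_n}$; $N_{n,a}=\sum_{t<n}\mathbf{1}\{I_t=a\}$. Each arm is pulled once in rounds $1..K$; arm $a$ has phase index $k_a$ starting at 1 with $T_1(a)=K+1$, $\tilde N_{1,a}=1$ and $\hat\mu_{1,a}$ its initial reward. At the start of each round $n>K$, for every $a$ with $N_{n,a}\ge2N_{T_{k_a}(a),a}$: $k_a\leftarrow k_a+1$, $T_{k_a}(a)=n$, $\tilde N_{k_a,a}=N_{T_{k_a}(a),a}-N_{T_{k_a-1}(a),a}$, $\hat\mu_{k_a,a}=\tilde N_{k_a,a}^{-1}\sum_{s=T_{k_a-1}(a)}^{T_{k_a}(a)-1}X_s\mathbf{1}\{I_s=a\}$. $k_{n,a}$ is the phase of $a$ at round $n$. Non-private GLR stopping: with $\hat a_n=\arg\max_a\hat\mu_{k_{n,a},a}$, $\tau^{\mathrm{NP}}_\delta=\inf\{n:\forall b\ne\hat a_n,\ \frac{(\hat\mu_{k_{n,\hat a_n},\hat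 a_n}-\hat\mu_{k_{n,b},b})^2}{1/\tilde N_{k_{n,\hat a_n},\hat a_n}+1/\tilde N_{k_{n,b},b}}\ge2c_{k_{n,\hat a_n}k_{n,b}}(\tilde N_{k_{n,\hat a_n},\hat a_n},\tilde N_{k_{n,b},b},\delta)\}$, recommending $\hat a=\hat a_{\tau}$, where $c_{k_1k_2}$ denotes $c_k$ with $k=k_1k_2$. Thresholds: $\zeta$ Riemann zeta, $g_G(\lambda)=2\lambda-2\lambda\log(4\lambda)+\log\zeta(2\lambda)-\frac12\log(1-\lambda)$, $\mathcal{C}_G(x)=\min_{\lambda\in(1/2,1]}\frac{g_G(\lambda)+x}{\lambda}$, and $c_k(n,m,\delta)=2\mathcal{C}_G\big(\frac12\log\frac{(K-1)\zeta(s)^2k^s}{\delta}\big)+2\log(4+\log n)+2\log(4+\log m)$. *)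

theory Defs
  imports "HOL-Probability.Probability"
begin

definition subgaussian1 :: "real measure \<Rightarrow> bool" where
  "subgaussian1 N \<longleftrightarrow> integrable N (\<lambda>x. x) \<and>
     (\<forall>l::real. integrable N (\<lambda>x. exp (l * (x - (\<integral>y. y \<partial>N)))) \<and>
        (\<integral>x. exp (l * (x - (\<integral>y. y \<partial>N))) \<partial>N) \<le> exp (l\<^sup>2 / 2))"

definition zeta_r :: "real \<Rightarrow> real" where
  "zeta_r s = (\<Sum>n. 1 / (real (Suc n)) powr s)"

definition g_G :: "real \<Rightarrow> real" where
  "g_G l = 2 * l - 2 * l * ln (4 * l) + ln (zeta_r (2 * l)) - 1/2 * ln (1 - l)"

text \<open>The minimum over (1/2,1] in the paper: the objective is +infinity at lambda = 1
  (since -1/2 log 0 = +infinity), so the min is over the open interval (1/2,1), where it is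
  attained; we write it as an infimum over (1/2,1).\<close>
definition C_G :: "real \<Rightarrow> real" where
  "C_G x = Inf ((\<lambda>l. (g_G l + x) / l) ` {1/2<..<1})"

definition c_thr :: "nat \<Rightarrow> real \<Rightarrow> nat \<Rightarrow> nat \<Rightarrow> nat \<Rightarrow> real \<Rightarrow> real" where
  "c_thr K s k n m \<delta> =
     2 * C_G (1/2 * ln ((real K - 1) * (zeta_r s)\<^sup>2 * (real k) powr s / \<delta>))
     + 2 * ln (4 + ln (real n)) + 2 * ln (4 + ln (real m))"

text \<open>Trajectory: i t is the arm pulled at round t (t >= 1), x t the observed reward.
  Arms are 0, ..., K-1.\<close>

definition cnt :: "(nat \<Rightarrow> nat) \<Rightarrow> nat \<Rightarrow> nat \<Rightarrow> nat" where
  "cnt i n a = card {t \<in> {1..<n}. i t = a}"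

text \<open>phase_T K i a k = Some T_k(a) if phase k of arm a is ever started, None otherwise.
  T_1(a) = K+1; T_{k+1}(a) is the first round n > T_k(a) with N_{n,a} >= 2 N_{T_k(a),a}.\<close>
primrec phase_T :: "nat \<Rightarrow> (nat \<Rightarrow> nat) \<Rightarrow> nat \<Rightarrow> nat \<Rightarrow> nat option" where
  "phase_T K i a 0 = None"
| "phase_T K i a (Suc k) =
     (if k = 0 then Some (K + 1)
      else (case phase_T K i a k of
              None \<Rightarrow> None
            | Some t \<Rightarrow>
                (if \<exists>n. t < n \<and> 2 * cnt i t a \<le> cnt i n a
                 then Some (LEAST n. t < n \<and> 2 * cnt i t a \<le> cnt i n a)
                 else None)))"

text \<open>k_{n,a}: phase of arm a at round n (for n >= K+1).\<close>
definition phase_at :: "nat \<Rightarrow> (nat \<Rightarrow> nat) \<Rightarrow> nat \<Rightarrow> nat \<Rightarrow> nat" where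
  "phase_at K i n a = (GREATEST k. \<exists>t. phase_T K i a k = Some t \<and> t \<le> n)"

definition Ntil :: "nat \<Rightarrow> (nat \<Rightarrow> nat) \<Rightarrow> nat \<Rightarrow> nat \<Rightarrow> nat" where
  "Ntil K i k a = (if k = 1 then 1
     else cnt i (the (phase_T K i a k)) a - cnt i (the (phase_T K i a (k - 1))) a)"

definition muhat :: "nat \<Rightarrow> (nat \<Rightarrow> nat) \<Rightarrow> (nat \<Rightarrow> real) \<Rightarrow> nat \<Rightarrow> nat \<Rightarrow> real" where
  "muhat K i x k a = (if k = 1 then x (THE t. t \<in> {1..K} \<and> i t = a)
     else (\<Sum>t \<in> {the (phase_T K i a (k - 1))..<the (phase_T K i a k)}.
              (if i t = a then x t else 0)) / real (Ntil K i k a))"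

definition cur_mu :: "nat \<Rightarrow> (nat \<Rightarrow> nat) \<Rightarrow> (nat \<Rightarrow> real) \<Rightarrow> nat \<Rightarrow> nat \<Rightarrow> real" where
  "cur_mu K i x n a = muhat K i x (phase_at K i n a) a"

definition cur_N :: "nat \<Rightarrow> (nat \<Rightarrow> nat) \<Rightarrow> nat \<Rightarrow> nat \<Rightarrow> nat" where
  "cur_N K i n a = Ntil K i (phase_at K i n a) a"

definition ahat :: "nat \<Rightarrow> (nat \<Rightarrow> nat) \<Rightarrow> (nat \<Rightarrow> real) \<Rightarrow> nat \<Rightarrow> nat" where
  "ahat K i x n = (LEAST a. a < K \<and> (\<forall>b<K. cur_mu K i x n b \<le> cur_mu K i x n a))"

definition glr_stop :: "nat \<Rightarrow> real \<Rightarrow> real \<Rightarrow> (nat \<Rightarrow> nat) \<Rightarrow> (nat \<Rightarrow> real) \<Rightarrow> nat \<Rightarrow> bool" where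
  "glr_stop K s \<delta> i x n \<longleftrightarrow> K + 1 \<le> n \<and>
     (let a = ahat K i x n in
      \<forall>b<K. b \<noteq> a \<longrightarrow>
        (cur_mu K i x n a - cur_mu K i x n b)\<^sup>2
          / (1 / real (cur_N K i n a) + 1 / real (cur_N K i n b))
        \<ge> 2 * c_thr K s (phase_at K i n a * phase_at K i n b)
                (cur_N K i n a) (cur_N K i n b) \<delta>)"

definition stops_wrong :: "nat \<Rightarrow> real \<Rightarrow> real \<Rightarrow> nat \<Rightarrow> (nat \<Rightarrow> nat) \<Rightarrow> (nat \<Rightarrow> real) \<Rightarrow> bool" where
  "stops_wrong K s \<delta> astar i x \<longleftrightarrow>
     (\<exists>n. glr_stop K s \<delta> i x n) \<and>
     ahat K i x (LEAST n. glr_stop K s \<delta> i x n) \<noteq> astar"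

end

theory Submission
  imports Defs
begin

definition lo :: "nat \<Rightarrow> nat" where "lo k = (if k \<le> 1 then 0 else 2^(k-2))"
definition hi :: "nat \<Rightarrow> nat" where "hi k = 2^(k-1)"
definition Nn :: "nat \<Rightarrow> nat" where "Nn k = hi k - lo k"
definition phi :: "nat \<Rightarrow> nat" where "phi c = (GREATEST k. 1 \<le> k \<and> (k = 1 \<or> 2^(k-1) \<le> c))"

definition Ssum :: "(nat \<Rightarrow> nat) \<Rightarrow> (nat \<Rightarrow> real) \<Rightarrow> nat \<Rightarrow> nat \<Rightarrow> nat \<Rightarrow> real" where
  "Ssum i x n a k = (\<Sum>t\<in>{1..<n}. if i t = a \<and> lo k \<le> cnt i t a \<and> cnt i t a < hi k then x t else 0)"

definition cm :: "(nat \<Rightarrow> nat) \<Rightarrow> (nat \<Rightarrow> real) \<Rightarrow> nat \<Rightarrow> nat \<Rightarrow> real" where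
  "cm i x n a = Ssum i x n a (phi (cnt i n a)) / real (Nn (phi (cnt i n a)))"

lemma cnt_Suc: "cnt i (Suc n) a = cnt i n a + (if 1 \<le> n \<and> i n = a then 1 else 0)"
proof (cases "1 \<le> n \<and> i n = a")
  case True
  have "{t \<in> {1..<Suc n}. i t = a} = insert n {t \<in> {1..<n}. i t = a}" using True by auto
  then show ?thesis using True unfolding cnt_def by simp
next
  case False
  have "{t \<in> {1..<Suc n}. i t = a} = {t \<in> {1..<n}. i t = a}" using False by (force simp: less_Suc_eq)
  then show ?thesis using False unfolding cnt_def by simp
qed

lemma cnt_mono: "m \<le> n \<Longrightarrow> cnt i m a \<le> cnt i n a"
  unfolding cnt_def by (rule card_mono) auto

lemma cnt_strict: "1 \<le> t \<Longrightarrow> i t = a \<Longrightarrow> t < T \<Longrightarrow> cnt i t a < cnt i T a"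
proof -
  assume "1 \<le> t" "i t = a" "t < T"
  then have "cnt i t a < cnt i (Suc t) a" by (simp add: cnt_Suc)
  also have "\<dots> \<le> cnt i T a" using \<open>t < T\<close> by (intro cnt_mono) simp
  finally show ?thesis .
qed

lemma cnt_0: "cnt i 0 a = 0" unfolding cnt_def by simp

lemma first_pull:
  assumes bij: "bij_betw i {1..K} {..<K}" and a: "a < K"
  obtains t0 where "t0 \<in> {1..K}" "i t0 = a" "\<And>t. t \<in> {1..K} \<Longrightarrow> i t = a \<Longrightarrow> t = t0"
proof -
  from bij a obtain t0 where "t0 \<in> {1..K}" "i t0 = a"
    by (metis bij_betw_def imageE lessThan_iff)
  moreover have "\<And>t. t \<in> {1..K} \<Longrightarrow> i t = a \<Longrightarrow> t = t0"
    using bij calculation unfolding bij_betw_def inj_on_def by metis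
  ultimately show ?thesis using that by blast
qed

lemma cnt_init:
  assumes bij: "bij_betw i {1..K} {..<K}" and a: "a < K"
  shows "cnt i (K+1) a = 1"
proof -
  obtain t0 where t0: "t0 \<in> {1..K}" "i t0 = a" "\<And>t. t \<in> {1..K} \<Longrightarrow> i t = a \<Longrightarrow> t = t0"
    using first_pull[OF bij a] by blast
  have "{t \<in> {1..<K+1}. i t = a} = {t0}"
  proof (rule set_eqI)
    fix t show "t \<in> {t \<in> {1..<K+1}. i t = a} \<longleftrightarrow> t \<in> {t0}"
      using t0(1,2) t0(3)[of t] by auto
  qed
  then show ?thesis unfolding cnt_def by simp
qed

lemma cnt_pos:
  assumes bij: "bij_betw i {1..K} {..<K}" and a: "a < K" and n: "K+1 \<le> n"
  shows "1 \<le> cnt i n a"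
  using cnt_mono[OF n, of i a] cnt_init[OF bij a] by simp

lemma phase_T_facts:
  assumes bij: "bij_betw i {1..K} {..<K}" and a: "a < K"
  shows "1 \<le> k \<Longrightarrow> phase_T K i a k = Some T \<Longrightarrow> cnt i T a = 2^(k-1) \<and> K+1 \<le> T
     \<and> (2 \<le> k \<longrightarrow> (\<exists>T'. phase_T K i a (k-1) = Some T' \<and> T' < T))"
proof (induction k arbitrary: T)
  case 0 then show ?case by simp
next
  case (Suc k)
  show ?case
  proof (cases "k = 0")
    case True
    then show ?thesis using Suc.prems cnt_init[OF bij a] by auto
  next
    case False
    then obtain t where t: "phase_T K i a k = Some t"
      using Suc.prems by (cases "phase_T K i a k") auto
    define P where "P = (\<lambda>n. t < n \<and> 2 * cnt i t a \<le> cnt i n a)"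
    have ex: "\<exists>n. P n" and T: "T = (LEAST n. P n)"
      using Suc.prems False t unfolding P_def by (auto split: if_splits)
    have IH: "cnt i t a = 2^(k-1)" "K+1 \<le> t" using Suc.IH[OF _ t] False by auto
    have PT: "P T" using LeastI_ex[OF ex] T by simp
    have c1: "cnt i t a \<ge> 1" using IH by simp
    obtain p where p: "T = Suc p" using PT unfolding P_def by (cases T) auto
    have "cnt i T a \<le> 2 * cnt i t a"
    proof (cases "p = t")
      case True
      then show ?thesis using p cnt_Suc[of i p a] c1 by simp
    next
      case False
      then have "t < p" using PT p unfolding P_def by simp
      then have "\<not> P p" using not_less_Least[of p P] T p by simp
      then have "cnt i p a < 2 * cnt i t a" using \<open>t < p\<close> unfolding P_def by simp
      then show ?thesis using p cnt_Suc[of i p a] by simp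
    qed
    then have "cnt i T a = 2 * cnt i t a" using PT unfolding P_def by simp
    then have "cnt i T a = 2^(Suc k - 1)" using IH False
      by (cases k) auto
    moreover have "K+1 \<le> T" using PT IH unfolding P_def by simp
    moreover have "t < T" using PT unfolding P_def by simp
    ultimately show ?thesis using t by auto
  qed
qed

lemma phase_T_exists:
  assumes bij: "bij_betw i {1..K} {..<K}" and a: "a < K" and n: "K+1 \<le> n"
  shows "1 \<le> k \<Longrightarrow> (k = 1 \<or> 2^(k-1) \<le> cnt i n a) \<Longrightarrow> \<exists>T. phase_T K i a k = Some T \<and> T \<le> n"
proof (induction k)
  case 0 then show ?case by simp
next
  case (Suc k)
  show ?case
  proof (cases "k = 0")
    case True then show ?thesis using n by simp
  next
    case False
    then have k0: "k \<noteq> 0" .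
    have pk: "2 * 2^(k-1) = (2::nat)^k" using k0 by (cases k) auto
    have c: "2^k \<le> cnt i n a" using Suc.prems k0 by auto
    have "k = 1 \<or> 2^(k-1) \<le> cnt i n a"
      using c pk by simp
    then obtain t where t: "phase_T K i a k = Some t" "t \<le> n" using Suc.IH k0 by auto
    have k1: "1 \<le> k" using k0 by simp
    have ct: "cnt i t a = 2^(k-1)" using phase_T_facts[OF bij a k1 t(1)] by simp
    have "t \<noteq> n"
    proof
      assume "t = n"
      then have "cnt i n a = 2^(k-1)" using ct by simp
      moreover have "(0::nat) < 2^(k-1)" by simp
      ultimately show False using c pk by linarith
    qed
    then have tn: "t < n" using t by simp
    have two: "2 * cnt i t a \<le> cnt i n a" using ct c pk by simp
    define P where "P = (\<lambda>m. t < m \<and> 2 * cnt i t a \<le> cnt i m a)"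
    have "P n" using tn two unfolding P_def by simp
    then have "phase_T K i a (Suc k) = Some (LEAST m. P m)"
      using k0 t unfolding P_def by auto
    moreover have "(LEAST m. P m) \<le> n" using \<open>P n\<close> by (rule Least_le)
    ultimately show ?thesis by blast
  qed
qed

lemma phase_iff:
  assumes bij: "bij_betw i {1..K} {..<K}" and a: "a < K" and n: "K+1 \<le> n"
  shows "(\<exists>T. phase_T K i a k = Some T \<and> T \<le> n) \<longleftrightarrow> (1 \<le> k \<and> (k = 1 \<or> 2^(k-1) \<le> cnt i n a))"
proof
  assume "\<exists>T. phase_T K i a k = Some T \<and> T \<le> n"
  then obtain T where T: "phase_T K i a k = Some T" "T \<le> n" by blast
  have k: "1 \<le> k" using T by (cases k) auto
  have "cnt i T a = 2^(k-1)" using phase_T_facts[OF bij a k T(1)] by simp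
  then show "1 \<le> k \<and> (k = 1 \<or> 2^(k-1) \<le> cnt i n a)" using k cnt_mono[OF T(2), of i a] by simp
next
  assume "1 \<le> k \<and> (k = 1 \<or> 2^(k-1) \<le> cnt i n a)"
  then show "\<exists>T. phase_T K i a k = Some T \<and> T \<le> n" using phase_T_exists[OF bij a n] by blast
qed

lemma phi_facts: "1 \<le> phi c \<and> (phi c = 1 \<or> 2^(phi c - 1) \<le> c)"
proof -
  let ?P = "\<lambda>k::nat. 1 \<le> k \<and> (k = 1 \<or> 2^(k-1) \<le> c)"
  have b: "\<And>y. ?P y \<Longrightarrow> y \<le> Suc c"
  proof -
    fix y assume P: "?P y"
    have l: "y - 1 < 2^(y-1)" by (rule less_exp)
    show "y \<le> Suc c"
    proof (cases "y = 1")
      case True then show ?thesis by simp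
    next
      case False
      with P have "2^(y-1) \<le> c" by simp
      with l show ?thesis by linarith
    qed
  qed
  have "?P 1" by simp
  then have "?P (Greatest ?P)" using GreatestI_nat[of ?P 1 "Suc c"] b by blast
  then show ?thesis unfolding phi_def .
qed

lemma phi_hi: "1 \<le> c \<Longrightarrow> hi (phi c) \<le> c"
  using phi_facts[of c] unfolding hi_def by auto

lemma phase_at_eq:
  assumes bij: "bij_betw i {1..K} {..<K}" and a: "a < K" and n: "K+1 \<le> n"
  shows "phase_at K i n a = phi (cnt i n a)"
  unfolding phase_at_def phi_def using phase_iff[OF bij a n] by simp

lemma muhat_eq:
  assumes bij: "bij_betw i {1..K} {..<K}" and a: "a < K" and k: "1 \<le> k"
    and T: "phase_T K i a k = Some T" and Tn: "T \<le> n"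
  shows "muhat K i x k a = Ssum i x n a k / real (Nn k) \<and> Ntil K i k a = Nn k"
proof (cases "k = 1")
  case True
  obtain t0 where t0: "t0 \<in> {1..K}" "i t0 = a" "\<And>t. t \<in> {1..K} \<Longrightarrow> i t = a \<Longrightarrow> t = t0"
    using first_pull[OF bij a] by blast
  have the: "(THE t. t \<in> {1..K} \<and> i t = a) = t0" using t0 by (intro the_equality) blast+
  have KT: "K+1 \<le> T" using phase_T_facts[OF bij a k T] by simp
  have c0: "cnt i t0 a = 0"
  proof -
    have "\<And>t. t \<in> {1..<t0} \<Longrightarrow> i t \<noteq> a"
    proof -
      fix t assume "t \<in> {1..<t0}"
      then have "t \<in> {1..K}" "t \<noteq> t0" using t0(1) by auto
      then show "i t \<noteq> a" using t0(3) by blast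
    qed
    then have "{t \<in> {1..<t0}. i t = a} = {}" by blast
    then show ?thesis unfolding cnt_def by simp
  qed
  have set: "{t \<in> {1..<n}. i t = a \<and> lo k \<le> cnt i t a \<and> cnt i t a < hi k} = {t0}"
  proof (rule set_eqI, rule iffI)
    fix t assume "t \<in> {t \<in> {1..<n}. i t = a \<and> lo k \<le> cnt i t a \<and> cnt i t a < hi k}"
    then have tt: "1 \<le> t" "i t = a" "cnt i t a = 0" using True unfolding hi_def by auto
    show "t \<in> {t0}"
    proof (cases "t0 < t")
      case True
      then have "cnt i t0 a < cnt i t a" using cnt_strict[of t0 i a t] t0(1,2) by simp
      then show ?thesis using tt by simp
    next
      case False
      then have "t \<in> {1..K}" using tt t0(1) by auto
      then show ?thesis using t0(3)[OF _ tt(2)] by simp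
    qed
  next
    fix t assume "t \<in> {t0}"
    then show "t \<in> {t \<in> {1..<n}. i t = a \<and> lo k \<le> cnt i t a \<and> cnt i t a < hi k}"
      using t0(1,2) c0 True KT Tn unfolding hi_def lo_def by auto
  qed
  have "Ssum i x n a k = (\<Sum>t\<in>{t \<in> {1..<n}. i t = a \<and> lo k \<le> cnt i t a \<and> cnt i t a < hi k}. x t)"
    unfolding Ssum_def by (rule sum.inter_filter[symmetric]) simp
  then have "Ssum i x n a k = x t0" using set by simp
  then show ?thesis using True the unfolding muhat_def Ntil_def Nn_def hi_def lo_def by simp
next
  case False
  then have k2: "2 \<le> k" using k by simp
  obtain T' where T': "phase_T K i a (k-1) = Some T'" "T' < T"
    using phase_T_facts[OF bij a k T] k2 by auto
  have cT: "cnt i T a = hi k" using phase_T_facts[OF bij a k T] unfolding hi_def by simp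
  have k1': "1 \<le> k - 1" using k2 by simp
  have "cnt i T' a = 2^(k-1-1)" using phase_T_facts[OF bij a k1' T'(1)] by simp
  moreover have "k - 1 - 1 = k - 2" by simp
  ultimately have cT': "cnt i T' a = lo k" using k2 unfolding lo_def by simp
  have KT': "K+1 \<le> T'" using phase_T_facts[OF bij a k1' T'(1)] by simp
  have Ntil: "Ntil K i k a = Nn k" unfolding Ntil_def Nn_def using False T T' cT cT' by simp
  have "(\<Sum>t\<in>{T'..<T}. if i t = a then x t else 0) = Ssum i x n a k"
  proof -
    have "Ssum i x n a k = (\<Sum>t\<in>{1..<n}. if t \<in> {T'..<T} then (if i t = a then x t else 0) else 0)"
      unfolding Ssum_def
    proof (rule sum.cong[OF refl])
      fix t assume t: "t \<in> {1..<n}"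
      have "i t = a \<Longrightarrow> (lo k \<le> cnt i t a \<and> cnt i t a < hi k) \<longleftrightarrow> (T' \<le> t \<and> t < T)"
      proof -
        assume ia: "i t = a"
        have A: "T' \<le> t \<Longrightarrow> lo k \<le> cnt i t a" using cnt_mono[of T' t i a] cT' by simp
        have B: "t < T' \<Longrightarrow> cnt i t a < lo k" using cnt_strict[of t i a T'] t ia cT' by simp
        have C: "T \<le> t \<Longrightarrow> hi k \<le> cnt i t a" using cnt_mono[of T t i a] cT by simp
        have D: "t < T \<Longrightarrow> cnt i t a < hi k" using cnt_strict[of t i a T] t ia cT by simp
        have "lo k \<le> cnt i t a \<longleftrightarrow> T' \<le> t"
        proof
          assume h: "lo k \<le> cnt i t a"
          show "T' \<le> t"
          proof (rule ccontr)
            assume "\<not> T' \<le> t"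
            then have "t < T'" by simp
            from B[OF this] h show False by simp
          qed
        next
          assume "T' \<le> t"
          from A[OF this] show "lo k \<le> cnt i t a" .
        qed
        moreover have "cnt i t a < hi k \<longleftrightarrow> t < T"
        proof
          assume h: "cnt i t a < hi k"
          show "t < T"
          proof (rule ccontr)
            assume "\<not> t < T"
            then have "T \<le> t" by simp
            from C[OF this] h show False by simp
          qed
        next
          assume "t < T"
          from D[OF this] show "cnt i t a < hi k" .
        qed
        ultimately show ?thesis by simp
      qed
      then show "(if i t = a \<and> lo k \<le> cnt i t a \<and> cnt i t a < hi k then x t else 0) =
          (if t \<in> {T'..<T} then if i t = a then x t else 0 else 0)" by auto
    qed
    also have "\<dots> = (\<Sum>t\<in>{1..<n} \<inter> {T'..<T}. if i t = a then x t else 0)"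
      by (rule sum.inter_restrict[symmetric]) simp
    also have "{1..<n} \<inter> {T'..<T} = {T'..<T}" using KT' Tn by auto
    finally show ?thesis by simp
  qed
  then show ?thesis using False T T' Ntil unfolding muhat_def by simp
qed

lemma cur_eq:
  assumes bij: "bij_betw i {1..K} {..<K}" and a: "a < K" and n: "K+1 \<le> n"
  shows "cur_mu K i x n a = cm i x n a \<and> cur_N K i n a = Nn (phi (cnt i n a))
    \<and> phase_at K i n a = phi (cnt i n a)"
proof -
  let ?k = "phi (cnt i n a)"
  have "\<exists>T. phase_T K i a ?k = Some T \<and> T \<le> n"
    using phase_iff[OF bij a n] phi_facts by blast
  then obtain T where T: "phase_T K i a ?k = Some T" "T \<le> n" by blast
  have k: "1 \<le> ?k" using phi_facts by blast
  show ?thesis using muhat_eq[OF bij a k T, of x] phase_at_eq[OF bij a n]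
    unfolding cur_mu_def cur_N_def cm_def by simp
qed

lemma zeta_summable: "1 < s \<Longrightarrow> summable (\<lambda>n. 1 / real (Suc n) powr s)"
proof -
  assume s: "1 < s"
  have "summable (\<lambda>n. real n powr (-s))" by (subst summable_real_powr_iff) (use s in simp)
  then have "summable (\<lambda>n. real (Suc n) powr (-s))" by (subst summable_Suc_iff)
  then show ?thesis by (simp add: powr_minus_divide)
qed

lemma zeta_ge1: "1 < s \<Longrightarrow> 1 \<le> zeta_r s"
proof -
  assume s: "1 < s"
  have "(\<Sum>n\<in>{0::nat}. 1 / real (Suc n) powr s) \<le> (\<Sum>n. 1 / real (Suc n) powr s)"
    by (rule sum_le_suminf[OF zeta_summable[OF s]]) auto
  then show ?thesis unfolding zeta_r_def by simp
qed

lemma ln4_bounds: "1 \<le> ln (4::real)" "ln (4::real) \<le> 2"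
proof -
  have "exp 1 < (4::real)" using e_less_272 by simp
  then show "1 \<le> ln (4::real)" by (metis exp_le_cancel_iff exp_ln less_le zero_less_numeral)
  have "1 + 2 + 2^2/2 \<le> exp (2::real)" by (rule exp_lower_Taylor_quadratic) simp
  then have "4 \<le> exp (2::real)" by simp
  then show "ln (4::real) \<le> 2" by (metis exp_le_cancel_iff exp_ln zero_less_numeral)
qed

lemma gG_lower:
  assumes l: "1/2 < l" "l < 1"
  shows "2 - 2 * ln 4 \<le> g_G l"
proof -
  have z: "0 \<le> ln (zeta_r (2*l))" using zeta_ge1[of "2*l"] l by simp
  have q: "ln (1 - l) \<le> 0" using l by simp
  have m: "ln (4*l) \<le> ln 4" using l by simp
  have "2 * l * ln (4*l) \<le> 2 * l * ln 4" using m l by (intro mult_left_mono) auto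
  moreover have "0 \<le> 2 * (1 - l) * (ln 4 - 1)" using l ln4_bounds by simp
  ultimately have "2 - 2 * ln 4 \<le> 2 * l - 2 * l * ln (4*l)" by (simp add: algebra_simps)
  then show ?thesis unfolding g_G_def using z q by simp
qed

lemma CG_lower:
  assumes x: "0 \<le> x"
  shows "x + 4 - 4 * ln 4 \<le> C_G x"
  unfolding C_G_def
proof (rule cInf_greatest)
  show "(\<lambda>l. (g_G l + x) / l) ` {1/2<..<1} \<noteq> {}" by (auto intro: exI[of _ "3/4"])
next
  fix y assume "y \<in> (\<lambda>l. (g_G l + x) / l) ` {1/2<..<1}"
  then obtain l where l: "1/2 < l" "l < 1" and y: "y = (g_G l + x) / l" by auto
  have g: "2 - 2 * ln 4 \<le> g_G l" using gG_lower l .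
  have "0 \<le> x * (1 - l)" using x l by simp
  moreover have "(2 - 2 * ln 4) * (2 * l - 1) \<le> 0" using l ln4_bounds by (intro mult_nonpos_nonneg) auto
  ultimately have "l * (x + 4 - 4 * ln 4) \<le> g_G l + x" using g by (simp add: algebra_simps)
  then show "x + 4 - 4 * ln 4 \<le> y" unfolding y using l by (simp add: pos_le_divide_eq mult.commute)
qed

lemma thr_bound:
  assumes K: "2 \<le> K" and d: "0 < \<delta>" "\<delta> < 1" and s: "1 < s" and k: "1 \<le> k"
    and N1: "1 \<le> N1" and N2: "1 \<le> N2"
  shows "0 \<le> c_thr K s k N1 N2 \<delta> \<and>
    exp (- c_thr K s k N1 N2 \<delta>) \<le> \<delta> / ((real K - 1) * (zeta_r s)\<^sup>2 * real k powr s)"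
proof -
  define y where "y = (real K - 1) * (zeta_r s)\<^sup>2 * real k powr s / \<delta>"
  have z: "1 \<le> zeta_r s" using zeta_ge1 s .
  have "1 \<le> (zeta_r s)\<^sup>2" using z by (simp add: one_le_power)
  moreover have "1 \<le> real k powr s" using k s by (simp add: ge_one_powr_ge_zero)
  moreover have "1 \<le> real K - 1" using K by simp
  ultimately have p: "1 \<le> (real K - 1) * (zeta_r s)\<^sup>2 * real k powr s"
    by (metis mult_mono' mult_1 order_trans zero_le_one order.refl)
  have y1: "1 \<le> y" unfolding y_def using p d by (simp add: le_divide_eq)
  define x where "x = 1/2 * ln y"
  have x0: "0 \<le> x" unfolding x_def using y1 by simp
  have l1: "ln 4 \<le> ln (4 + ln (real N1))"
  proof -
    have "0 \<le> ln (real N1)" using N1 by simp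
    then show ?thesis by (subst ln_le_cancel_iff) auto
  qed
  have l2: "ln 4 \<le> ln (4 + ln (real N2))"
  proof -
    have "0 \<le> ln (real N2)" using N2 by simp
    then show ?thesis by (subst ln_le_cancel_iff) auto
  qed
  have c: "c_thr K s k N1 N2 \<delta> = 2 * C_G x + 2 * ln (4 + ln (real N1)) + 2 * ln (4 + ln (real N2))"
    unfolding c_thr_def x_def y_def ..
  have "2 * x \<le> c_thr K s k N1 N2 \<delta>"
    using c CG_lower[OF x0] l1 l2 ln4_bounds by linarith
  then have cx: "ln y \<le> c_thr K s k N1 N2 \<delta>" unfolding x_def by simp
  have "exp (- c_thr K s k N1 N2 \<delta>) \<le> exp (- ln y)" using cx by simp
  also have "\<dots> = 1 / y" using y1 by (simp add: exp_minus inverse_eq_divide)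
  also have "\<dots> = \<delta> / ((real K - 1) * (zeta_r s)\<^sup>2 * real k powr s)" unfolding y_def by simp
  moreover have "0 \<le> ln y" using y1 by simp
  ultimately show ?thesis using cx by linarith
qed

definition ahat2 :: "nat \<Rightarrow> (nat \<Rightarrow> nat) \<Rightarrow> (nat \<Rightarrow> real) \<Rightarrow> nat \<Rightarrow> nat" where
  "ahat2 K i x n = (LEAST a. a < K \<and> (\<forall>b<K. cm i x n b \<le> cm i x n a))"

definition glr2 :: "nat \<Rightarrow> real \<Rightarrow> real \<Rightarrow> (nat \<Rightarrow> nat) \<Rightarrow> (nat \<Rightarrow> real) \<Rightarrow> nat \<Rightarrow> bool" where
  "glr2 K s \<delta> i x n \<longleftrightarrow> K + 1 \<le> n \<and>
     (let a = ahat2 K i x n in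
      \<forall>b<K. b \<noteq> a \<longrightarrow>
        (cm i x n a - cm i x n b)\<^sup>2
          / (1 / real (Nn (phi (cnt i n a))) + 1 / real (Nn (phi (cnt i n b))))
        \<ge> 2 * c_thr K s (phi (cnt i n a) * phi (cnt i n b))
                (Nn (phi (cnt i n a))) (Nn (phi (cnt i n b))) \<delta>)"

definition stops2 :: "nat \<Rightarrow> real \<Rightarrow> real \<Rightarrow> nat \<Rightarrow> (nat \<Rightarrow> nat) \<Rightarrow> (nat \<Rightarrow> real) \<Rightarrow> bool" where
  "stops2 K s \<delta> astar i x \<longleftrightarrow> (\<exists>n. glr2 K s \<delta> i x n) \<and> ahat2 K i x (LEAST n. glr2 K s \<delta> i x n) \<noteq> astar"

lemma ahat2_prop:
  assumes "0 < K"
  shows "ahat2 K i x n < K \<and> (\<forall>b<K. cm i x n b \<le> cm i x n (ahat2 K i x n))"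
proof -
  let ?f = "\<lambda>b. cm i x n b"
  have fin: "finite (?f ` {..<K})" "?f ` {..<K} \<noteq> {}" using assms by auto
  obtain a where a: "a < K" "?f a = Max (?f ` {..<K})" using Max_in[OF fin] by auto
  have "\<forall>b<K. ?f b \<le> ?f a" using a Max_ge[OF fin(1)] by auto
  then have "\<exists>a. a < K \<and> (\<forall>b<K. ?f b \<le> ?f a)" using a by blast
  then show ?thesis unfolding ahat2_def by (rule LeastI_ex)
qed

lemma glr_eq:
  assumes bij: "bij_betw i {1..K} {..<K}" and K: "0 < K"
  shows "glr_stop K s \<delta> i x n \<longleftrightarrow> glr2 K s \<delta> i x n"
    "K + 1 \<le> n \<Longrightarrow> ahat K i x n = ahat2 K i x n"
proof -
  show ah: "K + 1 \<le> n \<Longrightarrow> ahat K i x n = ahat2 K i x n"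
  proof -
    assume n: "K + 1 \<le> n"
    have "\<And>a. (a < K \<and> (\<forall>b<K. cur_mu K i x n b \<le> cur_mu K i x n a)) \<longleftrightarrow>
               (a < K \<and> (\<forall>b<K. cm i x n b \<le> cm i x n a))"
      using cur_eq[OF bij _ n] by auto
    then show ?thesis unfolding ahat_def ahat2_def by simp
  qed
  show "glr_stop K s \<delta> i x n \<longleftrightarrow> glr2 K s \<delta> i x n"
  proof (cases "K + 1 \<le> n")
    case False then show ?thesis unfolding glr_stop_def glr2_def by simp
  next
    case True
    have a: "ahat2 K i x n < K" using ahat2_prop[OF K] by blast
    show ?thesis unfolding glr_stop_def glr2_def Let_def ah[OF True]
      using cur_eq[OF bij a True] cur_eq[OF bij _ True] True by auto
  qed
qed

lemma stops_eq:
  assumes bij: "bij_betw i {1..K} {..<K}" and K: "0 < K"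
  shows "stops_wrong K s \<delta> astar i x \<longleftrightarrow> stops2 K s \<delta> astar i x"
proof -
  have g: "glr_stop K s \<delta> i x = glr2 K s \<delta> i x" using glr_eq[OF bij K] by auto
  show ?thesis
  proof (cases "\<exists>n. glr2 K s \<delta> i x n")
    case True
    let ?n = "LEAST n. glr2 K s \<delta> i x n"
    have "glr2 K s \<delta> i x ?n" using True by (rule LeastI_ex)
    then have "K + 1 \<le> ?n" unfolding glr2_def by simp
    then show ?thesis unfolding stops_wrong_def stops2_def g using glr_eq(2)[OF bij K] by simp
  next
    case False then show ?thesis unfolding stops_wrong_def stops2_def g by blast
  qed
qed

lemma meas_cnt:
  assumes "\<And>u. 1 \<le> u \<Longrightarrow> u < t \<Longrightarrow> I u \<in> measurable N (count_space UNIV)"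
  shows "(\<lambda>\<omega>. cnt (\<lambda>n. I n \<omega>) t a) \<in> measurable N (count_space UNIV)"
  using assms
proof (induction t)
  case 0 then show ?case by (simp add: cnt_0)
next
  case (Suc t)
  have [measurable]: "(\<lambda>\<omega>. cnt (\<lambda>n. I n \<omega>) t a) \<in> measurable N (count_space UNIV)"
    using Suc by simp
  show ?case
  proof (cases "1 \<le> t")
    case True
    have [measurable]: "I t \<in> measurable N (count_space UNIV)" using Suc.prems True by simp
    show ?thesis unfolding cnt_Suc by measurable
  next
    case False then show ?thesis unfolding cnt_Suc by simp
  qed
qed

lemma meas_Ssum:
  assumes "\<And>u. 1 \<le> u \<Longrightarrow> u < n \<Longrightarrow> I u \<in> measurable N (count_space UNIV)"
    and "\<And>u. 1 \<le> u \<Longrightarrow> u < n \<Longrightarrow> X u \<in> borel_measurable N"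
  shows "(\<lambda>\<omega>. Ssum (\<lambda>n. I n \<omega>) (\<lambda>n. X n \<omega>) n a k) \<in> borel_measurable N"
  unfolding Ssum_def
proof (rule borel_measurable_sum)
  fix t assume t: "t \<in> {1..<n}"
  have [measurable]: "I t \<in> measurable N (count_space UNIV)" "X t \<in> borel_measurable N"
    using assms t by auto
  have [measurable]: "(\<lambda>\<omega>. cnt (\<lambda>n. I n \<omega>) t a) \<in> measurable N (count_space UNIV)"
    using t by (intro meas_cnt assms) auto
  show "(\<lambda>\<omega>. if I t \<omega> = a \<and> lo k \<le> cnt (\<lambda>n. I n \<omega>) t a \<and> cnt (\<lambda>n. I n \<omega>) t a < hi k
          then X t \<omega> else 0) \<in> borel_measurable N" by measurable
qed

lemma meas_nat2:
  fixes F :: "nat \<Rightarrow> nat \<Rightarrow> real"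
  assumes f: "f \<in> measurable N (count_space UNIV)" and g: "g \<in> measurable N (count_space UNIV)"
  shows "(\<lambda>\<omega>. F (f \<omega>) (g \<omega>)) \<in> borel_measurable N"
proof (rule measurable_compose_countable[where f="\<lambda>i \<omega>. F i (g \<omega>)", OF _ f])
  fix i
  show "(\<lambda>\<omega>. F i (g \<omega>)) \<in> borel_measurable N"
    by (rule measurable_compose_countable[where f="\<lambda>j \<omega>. F i j", OF _ g]) simp
qed

lemma meas_stops2:
  assumes I: "\<And>u. 1 \<le> u \<Longrightarrow> I u \<in> measurable N (count_space UNIV)"
    and X: "\<And>u. 1 \<le> u \<Longrightarrow> X u \<in> borel_measurable N"
  shows "{\<omega> \<in> space N. stops2 K s \<delta> astar (\<lambda>n. I n \<omega>) (\<lambda>n. X n \<omega>)} \<in> sets N"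
proof -
  have cntm[measurable]: "\<And>n a. (\<lambda>\<omega>. cnt (\<lambda>n. I n \<omega>) n a) \<in> measurable N (count_space UNIV)"
    using I by (intro meas_cnt) auto
  have [measurable]: "\<And>n a k. (\<lambda>\<omega>. Ssum (\<lambda>n. I n \<omega>) (\<lambda>n. X n \<omega>) n a k) \<in> borel_measurable N"
    using I X by (intro meas_Ssum) auto
  have [measurable]: "\<And>n a. (\<lambda>\<omega>. cm (\<lambda>n. I n \<omega>) (\<lambda>n. X n \<omega>) n a) \<in> borel_measurable N"
    unfolding cm_def by measurable
  have ahm[measurable]: "\<And>n. (\<lambda>\<omega>. ahat2 K (\<lambda>n. I n \<omega>) (\<lambda>n. X n \<omega>) n) \<in> measurable N (count_space UNIV)"
    unfolding ahat2_def by measurable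
  have Dm[measurable]: "\<And>n a b. (\<lambda>\<omega>. (1 / real (Nn (phi (cnt (\<lambda>n. I n \<omega>) n a))) + 1 / real (Nn (phi (cnt (\<lambda>n. I n \<omega>) n b))))) \<in> borel_measurable N"
    by (rule meas_nat2[OF cntm cntm])
  have Rm[measurable]: "\<And>n a b. (\<lambda>\<omega>. 2 * c_thr K s (phi (cnt (\<lambda>n. I n \<omega>) n a) * phi (cnt (\<lambda>n. I n \<omega>) n b))
                (Nn (phi (cnt (\<lambda>n. I n \<omega>) n a))) (Nn (phi (cnt (\<lambda>n. I n \<omega>) n b))) \<delta>) \<in> borel_measurable N"
    by (rule meas_nat2[OF cntm cntm])
  define P where "P = (\<lambda>n a b \<omega>. (cm (\<lambda>n. I n \<omega>) (\<lambda>n. X n \<omega>) n a - cm (\<lambda>n. I n \<omega>) (\<lambda>n. X n \<omega>) n b)\<^sup>2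
          / (1 / real (Nn (phi (cnt (\<lambda>n. I n \<omega>) n a))) + 1 / real (Nn (phi (cnt (\<lambda>n. I n \<omega>) n b))))
        \<ge> 2 * c_thr K s (phi (cnt (\<lambda>n. I n \<omega>) n a) * phi (cnt (\<lambda>n. I n \<omega>) n b))
                (Nn (phi (cnt (\<lambda>n. I n \<omega>) n a))) (Nn (phi (cnt (\<lambda>n. I n \<omega>) n b))) \<delta>)"
  have Pm[measurable]: "\<And>n a b. Measurable.pred N (P n a b)"
    unfolding P_def by measurable
  have geq: "\<And>n \<omega>. glr2 K s \<delta> (\<lambda>n. I n \<omega>) (\<lambda>n. X n \<omega>) n \<longleftrightarrow> K + 1 \<le> n \<and>
     (\<forall>a0. ahat2 K (\<lambda>n. I n \<omega>) (\<lambda>n. X n \<omega>) n = a0 \<longrightarrow> (\<forall>b<K. b \<noteq> a0 \<longrightarrow> P n a0 b \<omega>))"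
    unfolding glr2_def P_def Let_def by auto
  have gm[measurable]: "\<And>n. Measurable.pred N (\<lambda>\<omega>. glr2 K s \<delta> (\<lambda>n. I n \<omega>) (\<lambda>n. X n \<omega>) n)"
    unfolding geq by measurable
  have Lm: "(\<lambda>\<omega>. LEAST n. glr2 K s \<delta> (\<lambda>n. I n \<omega>) (\<lambda>n. X n \<omega>) n) \<in> measurable N (count_space UNIV)"
    by (rule measurable_Least) simp
  have [measurable]: "(\<lambda>\<omega>. ahat2 K (\<lambda>n. I n \<omega>) (\<lambda>n. X n \<omega>) (LEAST n. glr2 K s \<delta> (\<lambda>n. I n \<omega>) (\<lambda>n. X n \<omega>) n)) \<in> measurable N (count_space UNIV)"
    by (rule measurable_compose_countable[where f="\<lambda>n \<omega>. ahat2 K (\<lambda>n. I n \<omega>) (\<lambda>n. X n \<omega>) n", OF ahm Lm])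
  show ?thesis unfolding stops2_def by measurable
qed

locale L4 =
  fixes M :: "'w measure" and G :: "nat \<Rightarrow> 'w measure"
    and I :: "nat \<Rightarrow> 'w \<Rightarrow> nat" and X :: "nat \<Rightarrow> 'w \<Rightarrow> real"
    and \<nu> :: "nat \<Rightarrow> real measure" and \<mu> :: "nat \<Rightarrow> real"
    and K astar :: nat and \<delta> s :: real
  assumes PS: "prob_space M"
    and d0: "0 < \<delta>" and d1: "\<delta> < 1" and s1: "1 < s"
    and arms: "\<forall>a<K. prob_space (\<nu> a) \<and> sets (\<nu> a) = sets borel \<and> subgaussian1 (\<nu> a)
                  \<and> \<mu> a = (\<integral>x. x \<partial>\<nu> a)"
    and best: "astar < K" "\<forall>b<K. b \<noteq> astar \<longrightarrow> \<mu> b < \<mu> astar"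
    and filt: "\<forall>n. subalgebra M (G n)" "\<forall>n. sets (G n) \<subseteq> sets (G (Suc n))"
    and adapted: "\<forall>n\<ge>1. I n \<in> measurable (G n) (count_space UNIV)"
                 "\<forall>n\<ge>1. X n \<in> borel_measurable (G (Suc n))"
    and range: "\<forall>n\<ge>1. \<forall>\<omega>\<in>space M. I n \<omega> < K"
    and init: "\<forall>\<omega>\<in>space M. bij_betw (\<lambda>t. I t \<omega>) {1..K} {..<K}"
    and obs: "\<forall>n\<ge>1. \<forall>A\<in>sets (G n). \<forall>B\<in>sets borel. \<forall>a<K.
               measure M (A \<inter> {\<omega>\<in>space M. I n \<omega> = a \<and> X n \<omega> \<in> B})
                 = measure M (A \<inter> {\<omega>\<in>space M. I n \<omega> = a}) * measure (\<nu> a) B"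
begin

sublocale P: prob_space M by (rule PS)

lemma spaceG: "space (G n) = space M" and setsG: "sets (G n) \<subseteq> sets M"
  using filt(1) unfolding subalgebra_def by auto

lemma G_mono: "m \<le> n \<Longrightarrow> sets (G m) \<subseteq> sets (G n)"
  using lift_Suc_mono_le[of "\<lambda>n. sets (G n)"] filt(2) by blast

lemma meas_up: "f \<in> measurable (G m) N \<Longrightarrow> m \<le> n \<Longrightarrow> f \<in> measurable (G n) N"
  using G_mono[of m n] spaceG unfolding measurable_def by auto

lemma meas_M: "f \<in> measurable (G m) N \<Longrightarrow> f \<in> measurable M N"
  using measurable_from_subalg filt(1) by blast

lemma I_M: "1 \<le> t \<Longrightarrow> I t \<in> measurable M (count_space UNIV)"
  using adapted(1) meas_M by blast
lemma X_M: "1 \<le> t \<Longrightarrow> X t \<in> borel_measurable M"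
  using adapted(2) meas_M by blast
lemma I_G: "1 \<le> t \<Longrightarrow> t \<le> n \<Longrightarrow> I t \<in> measurable (G n) (count_space UNIV)"
  using adapted(1) meas_up by blast
lemma X_G: "1 \<le> t \<Longrightarrow> t < n \<Longrightarrow> X t \<in> borel_measurable (G n)"
  using adapted(2) meas_up[of "X t" "Suc t" _ n] by simp

lemma nu_prob: "a < K \<Longrightarrow> prob_space (\<nu> a)" using arms by blast
lemma nu_sets: "a < K \<Longrightarrow> sets (\<nu> a) = sets borel" using arms by blast

lemma KL1:
  fixes h :: "real \<Rightarrow> ennreal"
  assumes n: "1 \<le> n" and A: "A \<in> sets (G n)" and a: "a < K" and h: "h \<in> borel_measurable borel"
  shows "(\<integral>\<^sup>+\<omega>. indicator (A \<inter> {\<omega>\<in>space M. I n \<omega> = a}) \<omega> * h (X n \<omega>) \<partial>M)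
       = emeasure M (A \<inter> {\<omega>\<in>space M. I n \<omega> = a}) * (\<integral>\<^sup>+x. h x \<partial>\<nu> a)"
proof -
  define E where "E = A \<inter> {\<omega>\<in>space M. I n \<omega> = a}"
  have [measurable]: "I n \<in> measurable M (count_space UNIV)" "X n \<in> borel_measurable M"
    using I_M X_M n by auto
  have AM: "A \<in> sets M" using A setsG by blast
  have EM[measurable]: "E \<in> sets M" unfolding E_def using AM by measurable
  interpret Q: prob_space "\<nu> a" using nu_prob a .
  have sp: "space (\<nu> a) = UNIV" using sets_eq_imp_space_eq[OF nu_sets[OF a]] by simp
  have hm: "h \<in> borel_measurable (\<nu> a)" using h measurable_cong_sets[OF nu_sets[OF a] refl] by blast
  define Pr where "Pr = (\<lambda>h. (\<integral>\<^sup>+\<omega>. indicator E \<omega> * h (X n \<omega>) \<partial>M) = emeasure M E * (\<integral>\<^sup>+x. h x \<partial>\<nu> a))"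
  have bm: "\<And>f. f \<in> borel_measurable (\<nu> a) \<Longrightarrow> f \<in> borel_measurable borel"
    using measurable_cong_sets[OF nu_sets[OF a] refl] by blast
  have cong: "\<And>f g. f \<in> borel_measurable (\<nu> a) \<Longrightarrow> g \<in> borel_measurable (\<nu> a) \<Longrightarrow>
      (\<And>x. x \<in> space (\<nu> a) \<Longrightarrow> f x = g x) \<Longrightarrow> Pr g \<Longrightarrow> Pr f"
  proof -
    fix f g :: "real \<Rightarrow> ennreal"
    assume fg: "\<And>x. x \<in> space (\<nu> a) \<Longrightarrow> f x = g x" and Pg: "Pr g"
    have "f = g" using fg sp by auto
    then show "Pr f" using Pg by simp
  qed
  have set: "\<And>B. B \<in> sets (\<nu> a) \<Longrightarrow> Pr (indicator B)"
  proof -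
    fix B assume set: "B \<in> sets (\<nu> a)"
    have B: "B \<in> sets borel" using set nu_sets[OF a] by simp
    have XB[measurable]: "{\<omega>\<in>space M. X n \<omega> \<in> B} \<in> sets M" using B by measurable
    have "(\<integral>\<^sup>+\<omega>. indicator E \<omega> * indicator B (X n \<omega>) \<partial>M)
        = (\<integral>\<^sup>+\<omega>. indicator (A \<inter> {\<omega>\<in>space M. I n \<omega> = a \<and> X n \<omega> \<in> B}) \<omega> \<partial>M)"
      by (intro nn_integral_cong) (auto simp: E_def indicator_def)
    also have "\<dots> = emeasure M (A \<inter> {\<omega>\<in>space M. I n \<omega> = a \<and> X n \<omega> \<in> B})"
    proof (rule nn_integral_indicator)
      have "{\<omega>\<in>space M. I n \<omega> = a \<and> X n \<omega> \<in> B} = {\<omega>\<in>space M. I n \<omega> = a} \<inter> {\<omega>\<in>space M. X n \<omega> \<in> B}"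
        by auto
      moreover have "{\<omega>\<in>space M. I n \<omega> = a} \<in> sets M" by measurable
      ultimately show "A \<inter> {\<omega>\<in>space M. I n \<omega> = a \<and> X n \<omega> \<in> B} \<in> sets M"
        using AM XB by auto
    qed
    also have "\<dots> = ennreal (measure M (A \<inter> {\<omega>\<in>space M. I n \<omega> = a \<and> X n \<omega> \<in> B}))"
      by (rule P.emeasure_eq_measure)
    also have "\<dots> = ennreal (measure M E * measure (\<nu> a) B)"
      using obs n A B a unfolding E_def by simp
    also have "\<dots> = emeasure M E * emeasure (\<nu> a) B"
      by (simp add: P.emeasure_eq_measure Q.emeasure_eq_measure ennreal_mult)
    also have "\<dots> = emeasure M E * (\<integral>\<^sup>+x. indicator B x \<partial>\<nu> a)"
      using set by simp
    finally show "Pr (indicator B)" unfolding Pr_def .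
  qed
  have mult: "\<And>u c. c < top \<Longrightarrow> u \<in> borel_measurable (\<nu> a) \<Longrightarrow> (\<And>x. x \<in> space (\<nu> a) \<Longrightarrow> u x < top) \<Longrightarrow>
      Pr u \<Longrightarrow> Pr (\<lambda>x. c * u x)"
  proof -
    fix u :: "real \<Rightarrow> ennreal" and c :: ennreal
    assume u: "u \<in> borel_measurable (\<nu> a)" and Pu: "Pr u"
    have um[measurable]: "u \<in> borel_measurable borel" using bm u by blast
    have e0: "(\<lambda>\<omega>. indicator E \<omega> * (c * u (X n \<omega>))) = (\<lambda>\<omega>. c * (indicator E \<omega> * u (X n \<omega>)))"
      by (simp add: fun_eq_iff ac_simps)
    have e1: "(\<integral>\<^sup>+\<omega>. c * (indicator E \<omega> * u (X n \<omega>)) \<partial>M) = c * (\<integral>\<^sup>+\<omega>. indicator E \<omega> * u (X n \<omega>) \<partial>M)"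
      by (rule nn_integral_cmult) measurable
    have e2: "(\<integral>\<^sup>+x. c * u x \<partial>\<nu> a) = c * (\<integral>\<^sup>+x. u x \<partial>\<nu> a)"
      by (rule nn_integral_cmult[OF u])
    show "Pr (\<lambda>x. c * u x)" using Pu unfolding Pr_def e0 e1 e2 by (simp add: mult.left_commute)
  qed
  have add: "\<And>u v. u \<in> borel_measurable (\<nu> a) \<Longrightarrow> (\<And>x. x \<in> space (\<nu> a) \<Longrightarrow> u x < top) \<Longrightarrow> Pr u \<Longrightarrow>
      v \<in> borel_measurable (\<nu> a) \<Longrightarrow> (\<And>x. x \<in> space (\<nu> a) \<Longrightarrow> v x < top) \<Longrightarrow>
      (\<And>x. x \<in> space (\<nu> a) \<Longrightarrow> u x = 0 \<or> v x = 0) \<Longrightarrow> Pr v \<Longrightarrow> Pr (\<lambda>x. v x + u x)"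
  proof -
    fix u v :: "real \<Rightarrow> ennreal"
    assume u: "u \<in> borel_measurable (\<nu> a)" and Pu: "Pr u" and v: "v \<in> borel_measurable (\<nu> a)" and Pv: "Pr v"
    have um[measurable]: "u \<in> borel_measurable borel" "v \<in> borel_measurable borel" using bm u v by blast+
    have e0: "(\<lambda>\<omega>. indicator E \<omega> * (v (X n \<omega>) + u (X n \<omega>))) = (\<lambda>\<omega>. indicator E \<omega> * v (X n \<omega>) + indicator E \<omega> * u (X n \<omega>))"
      by (simp add: fun_eq_iff distrib_left)
    have e1: "(\<integral>\<^sup>+\<omega>. indicator E \<omega> * v (X n \<omega>) + indicator E \<omega> * u (X n \<omega>) \<partial>M)
       = (\<integral>\<^sup>+\<omega>. indicator E \<omega> * v (X n \<omega>) \<partial>M) + (\<integral>\<^sup>+\<omega>. indicator E \<omega> * u (X n \<omega>) \<partial>M)"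
      by (rule nn_integral_add) measurable
    have e2: "(\<integral>\<^sup>+x. v x + u x \<partial>\<nu> a) = (\<integral>\<^sup>+x. v x \<partial>\<nu> a) + (\<integral>\<^sup>+x. u x \<partial>\<nu> a)"
      by (rule nn_integral_add[OF v u])
    show "Pr (\<lambda>x. v x + u x)" using Pu Pv unfolding Pr_def e0 e1 e2 by (simp add: distrib_left)
  qed
  have seq: "\<And>U. (\<And>i. U i \<in> borel_measurable (\<nu> a)) \<Longrightarrow> (\<And>i x. x \<in> space (\<nu> a) \<Longrightarrow> U i x < top) \<Longrightarrow>
      (\<And>i. Pr (U i)) \<Longrightarrow> incseq U \<Longrightarrow> h = (SUP i. U i) \<Longrightarrow> Pr (SUP i. U i)"
  proof -
    fix U :: "nat \<Rightarrow> real \<Rightarrow> ennreal"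
    assume U: "\<And>i. U i \<in> borel_measurable (\<nu> a)" and PU: "\<And>i. Pr (U i)" and inc0: "incseq U"
    have Um[measurable]: "\<And>i. U i \<in> borel_measurable borel" using bm U by blast
    have inc: "incseq (\<lambda>i \<omega>. indicator E \<omega> * U i (X n \<omega>))"
      using inc0 unfolding incseq_def le_fun_def by (auto intro: mult_left_mono)
    have e0: "(\<lambda>\<omega>. indicator E \<omega> * (SUP i. U i) (X n \<omega>)) = (\<lambda>\<omega>. (SUP i. indicator E \<omega> * U i (X n \<omega>)))"
      unfolding SUP_apply by (simp add: fun_eq_iff SUP_mult_left_ennreal)
    have e1: "(\<integral>\<^sup>+\<omega>. (SUP i. indicator E \<omega> * U i (X n \<omega>)) \<partial>M) = (SUP i. (\<integral>\<^sup>+\<omega>. indicator E \<omega> * U i (X n \<omega>) \<partial>M))"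
      by (rule nn_integral_monotone_convergence_SUP[OF inc]) measurable
    have e2: "(\<integral>\<^sup>+x. (SUP i. U i) x \<partial>\<nu> a) = (SUP i. (\<integral>\<^sup>+x. U i x \<partial>\<nu> a))"
      unfolding SUP_apply by (rule nn_integral_monotone_convergence_SUP[OF inc0 U])
    show "Pr (SUP i. U i)" using PU unfolding Pr_def e0 e1 e2 by (simp add: SUP_mult_left_ennreal)
  qed
  have "Pr h" by (rule borel_measurable_induct[of h "\<nu> a" Pr, OF hm cong set mult add seq])
  then have "(\<integral>\<^sup>+\<omega>. indicator E \<omega> * h (X n \<omega>) \<partial>M) = emeasure M E * (\<integral>\<^sup>+x. h x \<partial>\<nu> a)"
    unfolding Pr_def .
  then show ?thesis unfolding E_def .
qed

end

context L4 begin

lemma KL2: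
  fixes h :: "real \<Rightarrow> ennreal" and Z :: "'w \<Rightarrow> ennreal"
  assumes n: "1 \<le> n" and Z: "Z \<in> borel_measurable (G n)" and a: "a < K" and h: "h \<in> borel_measurable borel"
  shows "(\<integral>\<^sup>+\<omega>. Z \<omega> * indicator {\<omega>\<in>space M. I n \<omega> = a} \<omega> * h (X n \<omega>) \<partial>M)
       = (\<integral>\<^sup>+\<omega>. Z \<omega> * indicator {\<omega>\<in>space M. I n \<omega> = a} \<omega> \<partial>M) * (\<integral>\<^sup>+x. h x \<partial>\<nu> a)"
proof -
  define Ia where "Ia = {\<omega>\<in>space M. I n \<omega> = a}"
  have [measurable]: "I n \<in> measurable M (count_space UNIV)" "X n \<in> borel_measurable M"
    using I_M X_M n by auto
  have [measurable]: "h \<in> borel_measurable borel" using h .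
  have IaM[measurable]: "Ia \<in> sets M" unfolding Ia_def by measurable
  define J where "J = (\<integral>\<^sup>+x. h x \<partial>\<nu> a)"
  define Pr where "Pr = (\<lambda>Z. (\<integral>\<^sup>+\<omega>. Z \<omega> * indicator Ia \<omega> * h (X n \<omega>) \<partial>M)
       = (\<integral>\<^sup>+\<omega>. Z \<omega> * indicator Ia \<omega> \<partial>M) * J)"
  have bm: "\<And>f. f \<in> borel_measurable (G n) \<Longrightarrow> f \<in> borel_measurable M"
    using meas_M by blast
  have cong: "\<And>f g. f \<in> borel_measurable (G n) \<Longrightarrow> g \<in> borel_measurable (G n) \<Longrightarrow>
      (\<And>x. x \<in> space (G n) \<Longrightarrow> f x = g x) \<Longrightarrow> Pr g \<Longrightarrow> Pr f"
  proof -
    fix f g :: "'w \<Rightarrow> ennreal"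
    assume fg: "\<And>x. x \<in> space (G n) \<Longrightarrow> f x = g x" and Pg: "Pr g"
    have e1: "(\<integral>\<^sup>+\<omega>. f \<omega> * indicator Ia \<omega> * h (X n \<omega>) \<partial>M) = (\<integral>\<^sup>+\<omega>. g \<omega> * indicator Ia \<omega> * h (X n \<omega>) \<partial>M)"
      using fg spaceG by (intro nn_integral_cong) simp
    have e2: "(\<integral>\<^sup>+\<omega>. f \<omega> * indicator Ia \<omega> \<partial>M) = (\<integral>\<^sup>+\<omega>. g \<omega> * indicator Ia \<omega> \<partial>M)"
      using fg spaceG by (intro nn_integral_cong) simp
    show "Pr f" using Pg unfolding Pr_def e1 e2 .
  qed
  have set: "\<And>A. A \<in> sets (G n) \<Longrightarrow> Pr (indicator A)"
  proof -
    fix A assume A: "A \<in> sets (G n)"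
    have AM: "A \<in> sets M" using A setsG by blast
    have e0: "\<And>\<omega>. indicator A \<omega> * indicator Ia \<omega> = (indicator (A \<inter> Ia) \<omega> :: ennreal)"
      by (simp add: indicator_def)
    have "(\<integral>\<^sup>+\<omega>. indicator A \<omega> * indicator Ia \<omega> * h (X n \<omega>) \<partial>M) = (\<integral>\<^sup>+\<omega>. indicator (A \<inter> Ia) \<omega> * h (X n \<omega>) \<partial>M)"
      by (simp only: e0)
    also have "\<dots> = emeasure M (A \<inter> Ia) * J"
      unfolding J_def Ia_def by (rule KL1[OF n A a h])
    moreover have "(\<integral>\<^sup>+\<omega>. indicator A \<omega> * indicator Ia \<omega> \<partial>M) = emeasure M (A \<inter> Ia)"
      unfolding e0 using AM IaM by (intro nn_integral_indicator) auto
    ultimately show "Pr (indicator A)" unfolding Pr_def by simp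
  qed
  have mult: "\<And>u c. c < top \<Longrightarrow> u \<in> borel_measurable (G n) \<Longrightarrow> (\<And>x. x \<in> space (G n) \<Longrightarrow> u x < top) \<Longrightarrow>
      Pr u \<Longrightarrow> Pr (\<lambda>x. c * u x)"
  proof -
    fix u :: "'w \<Rightarrow> ennreal" and c :: ennreal
    assume u: "u \<in> borel_measurable (G n)" and Pu: "Pr u"
    have um[measurable]: "u \<in> borel_measurable M" using bm u by blast
    have e0: "(\<lambda>\<omega>. c * u \<omega> * indicator Ia \<omega> * h (X n \<omega>)) = (\<lambda>\<omega>. c * (u \<omega> * indicator Ia \<omega> * h (X n \<omega>)))"
      by (simp add: fun_eq_iff ac_simps)
    have e1: "(\<integral>\<^sup>+\<omega>. c * (u \<omega> * indicator Ia \<omega> * h (X n \<omega>)) \<partial>M) = c * (\<integral>\<^sup>+\<omega>. u \<omega> * indicator Ia \<omega> * h (X n \<omega>) \<partial>M)"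
      by (rule nn_integral_cmult) measurable
    have e2: "(\<lambda>\<omega>. c * u \<omega> * indicator Ia \<omega>) = (\<lambda>\<omega>. c * (u \<omega> * indicator Ia \<omega>))"
      by (simp add: fun_eq_iff ac_simps)
    have e3: "(\<integral>\<^sup>+\<omega>. c * (u \<omega> * indicator Ia \<omega>) \<partial>M) = c * (\<integral>\<^sup>+\<omega>. u \<omega> * indicator Ia \<omega> \<partial>M)"
      by (rule nn_integral_cmult) measurable
    show "Pr (\<lambda>x. c * u x)" using Pu unfolding Pr_def e0 e1 e2 e3 by (simp add: mult.assoc)
  qed
  have add: "\<And>u v. u \<in> borel_measurable (G n) \<Longrightarrow> (\<And>x. x \<in> space (G n) \<Longrightarrow> u x < top) \<Longrightarrow> Pr u \<Longrightarrow>
      v \<in> borel_measurable (G n) \<Longrightarrow> (\<And>x. x \<in> space (G n) \<Longrightarrow> v x < top) \<Longrightarrow>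
      (\<And>x. x \<in> space (G n) \<Longrightarrow> u x = 0 \<or> v x = 0) \<Longrightarrow> Pr v \<Longrightarrow> Pr (\<lambda>x. v x + u x)"
  proof -
    fix u v :: "'w \<Rightarrow> ennreal"
    assume u: "u \<in> borel_measurable (G n)" and Pu: "Pr u" and v: "v \<in> borel_measurable (G n)" and Pv: "Pr v"
    have um[measurable]: "u \<in> borel_measurable M" "v \<in> borel_measurable M" using bm u v by blast+
    have e0: "(\<lambda>\<omega>. (v \<omega> + u \<omega>) * indicator Ia \<omega> * h (X n \<omega>)) = (\<lambda>\<omega>. v \<omega> * indicator Ia \<omega> * h (X n \<omega>) + u \<omega> * indicator Ia \<omega> * h (X n \<omega>))"
      by (simp add: fun_eq_iff distrib_right)
    have e1: "(\<integral>\<^sup>+\<omega>. v \<omega> * indicator Ia \<omega> * h (X n \<omega>) + u \<omega> * indicator Ia \<omega> * h (X n \<omega>) \<partial>M)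
       = (\<integral>\<^sup>+\<omega>. v \<omega> * indicator Ia \<omega> * h (X n \<omega>) \<partial>M) + (\<integral>\<^sup>+\<omega>. u \<omega> * indicator Ia \<omega> * h (X n \<omega>) \<partial>M)"
      by (rule nn_integral_add) measurable
    have e2: "(\<lambda>\<omega>. (v \<omega> + u \<omega>) * indicator Ia \<omega>) = (\<lambda>\<omega>. v \<omega> * indicator Ia \<omega> + u \<omega> * indicator Ia \<omega>)"
      by (simp add: fun_eq_iff distrib_right)
    have e3: "(\<integral>\<^sup>+\<omega>. v \<omega> * indicator Ia \<omega> + u \<omega> * indicator Ia \<omega> \<partial>M)
       = (\<integral>\<^sup>+\<omega>. v \<omega> * indicator Ia \<omega> \<partial>M) + (\<integral>\<^sup>+\<omega>. u \<omega> * indicator Ia \<omega> \<partial>M)"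
      by (rule nn_integral_add) measurable
    show "Pr (\<lambda>x. v x + u x)" using Pu Pv unfolding Pr_def e0 e1 e2 e3 by (simp add: distrib_right)
  qed
  have seq: "\<And>U. (\<And>i. U i \<in> borel_measurable (G n)) \<Longrightarrow> (\<And>i x. x \<in> space (G n) \<Longrightarrow> U i x < top) \<Longrightarrow>
      (\<And>i. Pr (U i)) \<Longrightarrow> incseq U \<Longrightarrow> Z = (SUP i. U i) \<Longrightarrow> Pr (SUP i. U i)"
  proof -
    fix U :: "nat \<Rightarrow> 'w \<Rightarrow> ennreal"
    assume U: "\<And>i. U i \<in> borel_measurable (G n)" and PU: "\<And>i. Pr (U i)" and inc0: "incseq U"
    have Um[measurable]: "\<And>i. U i \<in> borel_measurable M" using bm U by blast
    have inc1: "incseq (\<lambda>i \<omega>. U i \<omega> * indicator Ia \<omega> * h (X n \<omega>))"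
      using inc0 unfolding incseq_def le_fun_def by (auto intro!: mult_right_mono)
    have inc2: "incseq (\<lambda>i \<omega>. U i \<omega> * indicator Ia \<omega>)"
      using inc0 unfolding incseq_def le_fun_def by (auto intro!: mult_right_mono)
    have e0: "(\<lambda>\<omega>. (SUP i. U i) \<omega> * indicator Ia \<omega> * h (X n \<omega>)) = (\<lambda>\<omega>. (SUP i. U i \<omega> * indicator Ia \<omega> * h (X n \<omega>)))"
      unfolding SUP_apply by (simp add: fun_eq_iff SUP_mult_right_ennreal)
    have e1: "(\<integral>\<^sup>+\<omega>. (SUP i. U i \<omega> * indicator Ia \<omega> * h (X n \<omega>)) \<partial>M) = (SUP i. (\<integral>\<^sup>+\<omega>. U i \<omega> * indicator Ia \<omega> * h (X n \<omega>) \<partial>M))"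
      by (rule nn_integral_monotone_convergence_SUP[OF inc1]) measurable
    have e2: "(\<lambda>\<omega>. (SUP i. U i) \<omega> * indicator Ia \<omega>) = (\<lambda>\<omega>. (SUP i. U i \<omega> * indicator Ia \<omega>))"
      unfolding SUP_apply by (simp add: fun_eq_iff SUP_mult_right_ennreal)
    have e3: "(\<integral>\<^sup>+\<omega>. (SUP i. U i \<omega> * indicator Ia \<omega>) \<partial>M) = (SUP i. (\<integral>\<^sup>+\<omega>. U i \<omega> * indicator Ia \<omega> \<partial>M))"
      by (rule nn_integral_monotone_convergence_SUP[OF inc2]) measurable
    show "Pr (SUP i. U i)" using PU unfolding Pr_def e0 e1 e2 e3 by (simp add: SUP_mult_right_ennreal)
  qed
  have "Pr Z" by (rule borel_measurable_induct[of Z "G n" Pr, OF Z cong set mult add seq])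
  then show ?thesis unfolding Pr_def Ia_def J_def .
qed

end

lemma cnt_le: "cnt i n a \<le> n"
proof -
  have "cnt i n a \<le> card {1..<n}" unfolding cnt_def by (rule card_mono) auto
  then show ?thesis by simp
qed

context L4 begin

definition lam :: "(nat \<Rightarrow> nat \<Rightarrow> real) \<Rightarrow> 'w \<Rightarrow> nat \<Rightarrow> real" where
  "lam L \<omega> t = L (I t \<omega>) (cnt (\<lambda>u. I u \<omega>) t (I t \<omega>))"

definition W :: "(nat \<Rightarrow> nat \<Rightarrow> real) \<Rightarrow> nat \<Rightarrow> 'w \<Rightarrow> ennreal" where
  "W L n \<omega> = ennreal (exp (\<Sum>t\<in>{1..<n}. lam L \<omega> t * (X t \<omega> - \<mu> (I t \<omega>)) - (lam L \<omega> t)\<^sup>2 / 2))"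

lemma cnt_G: "t \<le> n \<Longrightarrow> (\<lambda>\<omega>. cnt (\<lambda>u. I u \<omega>) t a) \<in> measurable (G n) (count_space UNIV)"
  by (rule meas_cnt) (use I_G in auto)

lemma W_meas: "W L n \<in> borel_measurable (G n)"
proof -
  have "(\<lambda>\<omega>. \<Sum>t\<in>{1..<n}. lam L \<omega> t * (X t \<omega> - \<mu> (I t \<omega>)) - (lam L \<omega> t)\<^sup>2 / 2) \<in> borel_measurable (G n)"
  proof (rule borel_measurable_sum)
    fix t assume t: "t \<in> {1..<n}"
    have [measurable]: "I t \<in> measurable (G n) (count_space UNIV)" "X t \<in> borel_measurable (G n)"
      using I_G X_G t by auto
    have [measurable]: "\<And>a. (\<lambda>\<omega>. cnt (\<lambda>u. I u \<omega>) t a) \<in> measurable (G n) (count_space UNIV)"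
      using cnt_G t by auto
    show "(\<lambda>\<omega>. lam L \<omega> t * (X t \<omega> - \<mu> (I t \<omega>)) - (lam L \<omega> t)\<^sup>2 / 2) \<in> borel_measurable (G n)"
      unfolding lam_def by measurable
  qed
  then show ?thesis unfolding W_def by measurable
qed

lemma W_M: "W L n \<in> borel_measurable M"
  using W_meas meas_M by blast

lemma h_int:
  assumes a: "a < K"
  shows "(\<integral>\<^sup>+x. ennreal (exp (l * (x - \<mu> a) - l\<^sup>2 / 2)) \<partial>\<nu> a) \<le> 1"
proof -
  interpret Q: prob_space "\<nu> a" using nu_prob a .
  have sg: "subgaussian1 (\<nu> a)" and mu: "\<mu> a = (\<integral>x. x \<partial>\<nu> a)" using arms a by auto
  have int: "integrable (\<nu> a) (\<lambda>x. exp (l * (x - \<mu> a)))"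
    and le: "(\<integral>x. exp (l * (x - \<mu> a)) \<partial>\<nu> a) \<le> exp (l\<^sup>2 / 2)"
    using sg unfolding subgaussian1_def mu by auto
  have eq: "\<And>x. exp (l * (x - \<mu> a) - l\<^sup>2 / 2) = exp (l * (x - \<mu> a)) / exp (l\<^sup>2 / 2)"
    by (simp add: exp_diff)
  have int2: "integrable (\<nu> a) (\<lambda>x. exp (l * (x - \<mu> a)) / exp (l\<^sup>2 / 2))"
    using int by (rule integrable_divide)
  have "(\<integral>\<^sup>+x. ennreal (exp (l * (x - \<mu> a) - l\<^sup>2 / 2)) \<partial>\<nu> a)
      = (\<integral>\<^sup>+x. ennreal (exp (l * (x - \<mu> a)) / exp (l\<^sup>2 / 2)) \<partial>\<nu> a)"
    by (simp only: eq)
  also have "\<dots> = ennreal (\<integral>x. exp (l * (x - \<mu> a)) / exp (l\<^sup>2 / 2) \<partial>\<nu> a)"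
    by (rule nn_integral_eq_integral[OF int2]) simp
  also have "\<dots> \<le> ennreal 1"
  proof (rule ennreal_leI)
    have "(\<integral>x. exp (l * (x - \<mu> a)) / exp (l\<^sup>2 / 2) \<partial>\<nu> a) = (\<integral>x. exp (l * (x - \<mu> a)) \<partial>\<nu> a) / exp (l\<^sup>2 / 2)"
      by (rule integral_divide_zero)
    also have "\<dots> \<le> 1" using le by simp
    finally show "(\<integral>x. exp (l * (x - \<mu> a)) / exp (l\<^sup>2 / 2) \<partial>\<nu> a) \<le> 1" .
  qed
  finally show ?thesis by simp
qed

lemma decomp:
  fixes g :: "nat \<Rightarrow> nat \<Rightarrow> ennreal"
  assumes n: "1 \<le> n" and \<omega>: "\<omega> \<in> space M"
  shows "(\<Sum>a<K. \<Sum>j\<le>n. W L n \<omega> * indicator {\<omega>\<in>space M. cnt (\<lambda>u. I u \<omega>) n a = j} \<omega>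
            * indicator {\<omega>\<in>space M. I n \<omega> = a} \<omega> * g a j)
       = W L n \<omega> * g (I n \<omega>) (cnt (\<lambda>u. I u \<omega>) n (I n \<omega>))"
proof -
  define a0 where "a0 = I n \<omega>"
  define j0 where "j0 = cnt (\<lambda>u. I u \<omega>) n a0"
  have a0: "a0 < K" using range n \<omega> unfolding a0_def by auto
  have j0: "j0 \<le> n" unfolding j0_def by (rule cnt_le)
  have inner: "\<And>a. (\<Sum>j\<le>n. W L n \<omega> * indicator {\<omega>\<in>space M. cnt (\<lambda>u. I u \<omega>) n a = j} \<omega>
            * indicator {\<omega>\<in>space M. I n \<omega> = a} \<omega> * g a j)
        = (if a = a0 then W L n \<omega> * g a0 j0 else 0)"
  proof -
    fix a
    show "(\<Sum>j\<le>n. W L n \<omega> * indicator {\<omega>\<in>space M. cnt (\<lambda>u. I u \<omega>) n a = j} \<omega>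
            * indicator {\<omega>\<in>space M. I n \<omega> = a} \<omega> * g a j)
        = (if a = a0 then W L n \<omega> * g a0 j0 else 0)"
    proof (cases "a = a0")
      case True
      have "(\<Sum>j\<le>n. W L n \<omega> * indicator {\<omega>\<in>space M. cnt (\<lambda>u. I u \<omega>) n a = j} \<omega>
            * indicator {\<omega>\<in>space M. I n \<omega> = a} \<omega> * g a j)
          = (\<Sum>j\<le>n. if j = j0 then W L n \<omega> * g a0 j else 0)"
        using True \<omega> unfolding a0_def j0_def by (intro sum.cong) (auto simp: indicator_def)
      also have "\<dots> = W L n \<omega> * g a0 j0" using j0 by (simp add: sum.delta)
      finally show ?thesis using True by simp
    next
      case False
      then show ?thesis using \<omega> unfolding a0_def by (auto simp: indicator_def)
    qed
  qed
  have "(\<Sum>a<K. \<Sum>j\<le>n. W L n \<omega> * indicator {\<omega>\<in>space M. cnt (\<lambda>u. I u \<omega>) n a = j} \<omega>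
            * indicator {\<omega>\<in>space M. I n \<omega> = a} \<omega> * g a j)
       = (\<Sum>a<K. if a = a0 then W L n \<omega> * g a0 j0 else 0)"
    by (simp only: inner)
  also have "\<dots> = W L n \<omega> * g a0 j0" using a0 by (simp add: sum.delta)
  finally show ?thesis unfolding a0_def j0_def .
qed

lemma W_Suc:
  assumes n: "1 \<le> n"
  shows "W L (Suc n) \<omega> = W L n \<omega> * ennreal (exp (L (I n \<omega>) (cnt (\<lambda>u. I u \<omega>) n (I n \<omega>))
      * (X n \<omega> - \<mu> (I n \<omega>)) - (L (I n \<omega>) (cnt (\<lambda>u. I u \<omega>) n (I n \<omega>)))\<^sup>2 / 2))"
proof -
  have "{1..<Suc n} = insert n {1..<n}" using n by auto
  then show ?thesis unfolding W_def lam_def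
    by (simp add: exp_add ennreal_mult[symmetric] add.commute)
qed

lemma Wstep:
  assumes n: "1 \<le> n"
  shows "(\<integral>\<^sup>+\<omega>. W L (Suc n) \<omega> \<partial>M) \<le> (\<integral>\<^sup>+\<omega>. W L n \<omega> \<partial>M)"
proof -
  define h where "h = (\<lambda>a j x. ennreal (exp (L a j * (x - \<mu> a) - (L a j)\<^sup>2 / 2)))"
  define F where "F = (\<lambda>a j \<omega>. W L n \<omega> * indicator {\<omega>\<in>space M. cnt (\<lambda>u. I u \<omega>) n a = j} \<omega>
            * indicator {\<omega>\<in>space M. I n \<omega> = a} \<omega>)"
  have [measurable]: "I n \<in> measurable M (count_space UNIV)" "X n \<in> borel_measurable M"
    using I_M X_M n by auto
  have cG[measurable]: "\<And>a. (\<lambda>\<omega>. cnt (\<lambda>u. I u \<omega>) n a) \<in> measurable (G n) (count_space UNIV)"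
    using cnt_G by auto
  have [measurable]: "\<And>a. (\<lambda>\<omega>. cnt (\<lambda>u. I u \<omega>) n a) \<in> measurable M (count_space UNIV)"
    using cG meas_M by blast
  have WG[measurable]: "W L n \<in> borel_measurable (G n)" by (rule W_meas)
  have [measurable]: "W L n \<in> borel_measurable M" by (rule W_M)
  have hm[measurable]: "\<And>a j. h a j \<in> borel_measurable borel" unfolding h_def by measurable
  have Fm[measurable]: "\<And>a j. F a j \<in> borel_measurable M" unfolding F_def by measurable
  have CG: "\<And>a j. {\<omega>\<in>space (G n). cnt (\<lambda>u. I u \<omega>) n a = j} \<in> sets (G n)" by measurable
  have spG: "\<And>a j. {\<omega>\<in>space M. cnt (\<lambda>u. I u \<omega>) n a = j} = {\<omega>\<in>space (G n). cnt (\<lambda>u. I u \<omega>) n a = j}"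
    using spaceG by simp
  have ZG: "\<And>a j. (\<lambda>\<omega>. W L n \<omega> * indicator {\<omega>\<in>space M. cnt (\<lambda>u. I u \<omega>) n a = j} \<omega>) \<in> borel_measurable (G n)"
    unfolding spG using CG by measurable
  have "(\<integral>\<^sup>+\<omega>. W L (Suc n) \<omega> \<partial>M) = (\<integral>\<^sup>+\<omega>. (\<Sum>a<K. \<Sum>j\<le>n. F a j \<omega> * h a j (X n \<omega>)) \<partial>M)"
  proof (rule nn_integral_cong)
    fix \<omega> assume \<omega>: "\<omega> \<in> space M"
    show "W L (Suc n) \<omega> = (\<Sum>a<K. \<Sum>j\<le>n. F a j \<omega> * h a j (X n \<omega>))"
      unfolding F_def using decomp[OF n \<omega>, of L "\<lambda>a j. h a j (X n \<omega>)"] W_Suc[OF n, of L \<omega>]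
      by (simp add: h_def)
  qed
  also have "\<dots> = (\<Sum>a<K. \<Sum>j\<le>n. (\<integral>\<^sup>+\<omega>. F a j \<omega> * h a j (X n \<omega>) \<partial>M))"
    by (simp add: nn_integral_sum)
  also have "\<dots> \<le> (\<Sum>a<K. \<Sum>j\<le>n. (\<integral>\<^sup>+\<omega>. F a j \<omega> \<partial>M))"
  proof (intro sum_mono)
    fix a j assume a: "a \<in> {..<K}"
    have "(\<integral>\<^sup>+\<omega>. F a j \<omega> * h a j (X n \<omega>) \<partial>M) = (\<integral>\<^sup>+\<omega>. F a j \<omega> \<partial>M) * (\<integral>\<^sup>+x. h a j x \<partial>\<nu> a)"
      unfolding F_def by (rule KL2[OF n ZG _ hm]) (use a in simp)
    also have "\<dots> \<le> (\<integral>\<^sup>+\<omega>. F a j \<omega> \<partial>M) * 1"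
      using h_int[of a "L a j"] a unfolding h_def by (intro mult_left_mono) auto
    finally show "(\<integral>\<^sup>+\<omega>. F a j \<omega> * h a j (X n \<omega>) \<partial>M) \<le> (\<integral>\<^sup>+\<omega>. F a j \<omega> \<partial>M)" by simp
  qed
  also have "\<dots> = (\<integral>\<^sup>+\<omega>. (\<Sum>a<K. \<Sum>j\<le>n. F a j \<omega>) \<partial>M)"
    by (simp add: nn_integral_sum)
  also have "\<dots> = (\<integral>\<^sup>+\<omega>. W L n \<omega> \<partial>M)"
  proof (rule nn_integral_cong)
    fix \<omega> assume \<omega>: "\<omega> \<in> space M"
    show "(\<Sum>a<K. \<Sum>j\<le>n. F a j \<omega>) = W L n \<omega>"
      unfolding F_def using decomp[OF n \<omega>, of L "\<lambda>a j. 1"] by simp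
  qed
  finally show ?thesis .
qed

lemma W_le1: "(\<integral>\<^sup>+\<omega>. W L n \<omega> \<partial>M) \<le> 1"
proof (induction n)
  case 0
  have "(\<integral>\<^sup>+\<omega>. W L 0 \<omega> \<partial>M) = (\<integral>\<^sup>+\<omega>. 1 \<partial>M)" unfolding W_def by simp
  then show ?case using P.emeasure_space_1 by simp
next
  case (Suc n)
  show ?case
  proof (cases "n = 0")
    case True
    have "(\<integral>\<^sup>+\<omega>. W L (Suc n) \<omega> \<partial>M) = (\<integral>\<^sup>+\<omega>. 1 \<partial>M)" unfolding W_def True by simp
    then show ?thesis using P.emeasure_space_1 by simp
  next
    case False
    then show ?thesis using Wstep[of n L] Suc.IH by simp
  qed
qed

end

lemma count_sel:
  assumes "l \<le> h"
  shows "card {t \<in> {1..<n}. i t = a \<and> l \<le> cnt i t a \<and> cnt i t a < h} = min h (cnt i n a) - min l (cnt i n a)"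
proof (induction n)
  case 0 then show ?case by (simp add: cnt_0)
next
  case (Suc n)
  show ?case
  proof (cases "1 \<le> n \<and> i n = a")
    case True
    have c: "cnt i (Suc n) a = cnt i n a + 1" using True by (simp add: cnt_Suc)
    show ?thesis
    proof (cases "l \<le> cnt i n a \<and> cnt i n a < h")
      case True2: True
      have "{t \<in> {1..<Suc n}. i t = a \<and> l \<le> cnt i t a \<and> cnt i t a < h}
          = insert n {t \<in> {1..<n}. i t = a \<and> l \<le> cnt i t a \<and> cnt i t a < h}"
        using True True2 by (auto simp: less_Suc_eq)
      then show ?thesis using Suc.IH c True2 assms by (simp add: Suc_diff_le)
    next
      case False2: False
      have "{t \<in> {1..<Suc n}. i t = a \<and> l \<le> cnt i t a \<and> cnt i t a < h}
          = {t \<in> {1..<n}. i t = a \<and> l \<le> cnt i t a \<and> cnt i t a < h}"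
        using False2 by (auto simp: less_Suc_eq)
      moreover have "min h (cnt i n a + 1) - min l (cnt i n a + 1) = min h (cnt i n a) - min l (cnt i n a)"
        using False2 assms by arith
      ultimately show ?thesis using Suc.IH c by simp
    qed
  next
    case False
    have c: "cnt i (Suc n) a = cnt i n a" using False by (simp add: cnt_Suc)
    have "{t \<in> {1..<Suc n}. i t = a \<and> l \<le> cnt i t a \<and> cnt i t a < h}
          = {t \<in> {1..<n}. i t = a \<and> l \<le> cnt i t a \<and> cnt i t a < h}"
      using False by (force simp: less_Suc_eq)
    then show ?thesis using Suc.IH c by simp
  qed
qed

lemma lo_le_hi: "lo k \<le> hi k"
  unfolding lo_def hi_def by (cases k) (auto simp: Suc_diff_le power_increasing)

lemma Nn_ge1: "1 \<le> k \<Longrightarrow> 1 \<le> Nn k"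
proof -
  assume k: "1 \<le> k"
  show ?thesis
  proof (cases "k = 1")
    case True then show ?thesis unfolding Nn_def lo_def hi_def by simp
  next
    case False
    then obtain m where m: "k = Suc (Suc m)" using k by (cases k; cases "k - 1") auto
    then show ?thesis unfolding Nn_def lo_def hi_def by simp
  qed
qed

lemma count_real:
  assumes "hi k \<le> cnt i n a"
  shows "(\<Sum>t\<in>{1..<n}. if i t = a \<and> lo k \<le> cnt i t a \<and> cnt i t a < hi k then 1 else 0) = real (Nn k)"
proof -
  have "(\<Sum>t\<in>{1..<n}. if i t = a \<and> lo k \<le> cnt i t a \<and> cnt i t a < hi k then 1 else (0::real))
      = (\<Sum>t\<in>{t \<in> {1..<n}. i t = a \<and> lo k \<le> cnt i t a \<and> cnt i t a < hi k}. 1)"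
    by (rule sum.inter_filter[symmetric]) simp
  also have "\<dots> = real (card {t \<in> {1..<n}. i t = a \<and> lo k \<le> cnt i t a \<and> cnt i t a < hi k})" by simp
  also have "\<dots> = real (Nn k)" using count_sel[OF lo_le_hi, of n i a k] assms lo_le_hi[of k]
    unfolding Nn_def by simp
  finally show ?thesis .
qed

lemma Ssum_stable:
  assumes "hi k \<le> cnt i n a"
  shows "Ssum i x (Suc n) a k = Ssum i x n a k"
proof (cases "n = 0")
  case True then show ?thesis unfolding Ssum_def by simp
next
  case False
  then have "{1..<Suc n} = insert n {1..<n}" by auto
  then show ?thesis unfolding Ssum_def using assms by auto
qed

lemma lin_sum:
  fixes a bb cc d :: "nat \<Rightarrow> real"
  shows "(\<Sum>t\<in>S. p * (a t - m * bb t) - q * bb t - r * (cc t - m2 * d t) - w * d t)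
    = p * (sum a S - m * sum bb S) - q * sum bb S - r * (sum cc S - m2 * sum d S) - w * sum d S"
  by (induction S rule: infinite_finite_induct) (simp_all add: algebra_simps)

context L4 begin

lemma event_bound:
  assumes b: "b < K" "b \<noteq> astar" and k1: "1 \<le> k1" and k2: "1 \<le> k2"
  defines "N1 \<equiv> real (Nn k1)" and "N2 \<equiv> real (Nn k2)"
  defines "c \<equiv> c_thr K s (k1 * k2) (Nn k1) (Nn k2) \<delta>"
  defines "r \<equiv> sqrt (2 * c * (1 / N1 + 1 / N2))"
  defines "F \<equiv> (\<lambda>n. {\<omega>\<in>space M. hi k1 \<le> cnt (\<lambda>u. I u \<omega>) n b \<and> hi k2 \<le> cnt (\<lambda>u. I u \<omega>) n astar \<and>
      r \<le> (Ssum (\<lambda>u. I u \<omega>) (\<lambda>u. X u \<omega>) n b k1 / N1 - \<mu> b)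
          - (Ssum (\<lambda>u. I u \<omega>) (\<lambda>u. X u \<omega>) n astar k2 / N2 - \<mu> astar)})"
  shows "(\<Union>n. F n) \<in> sets M \<and> measure M (\<Union>n. F n) \<le> exp (- c)"
proof -
  have K2: "2 \<le> K" using b best(1) by auto
  have N1: "1 \<le> N1" and N2: "1 \<le> N2" unfolding N1_def N2_def using Nn_ge1 k1 k2 by auto
  have k12: "1 \<le> k1 * k2" using k1 k2 by simp
  have c0: "0 \<le> c" unfolding c_def using thr_bound[OF K2 d0 d1 s1 k12 Nn_ge1[OF k1] Nn_ge1[OF k2]] by blast
  define sv where "sv = 1 / N1 + 1 / N2"
  have sv0: "0 < sv" unfolding sv_def using N1 N2 by (simp add: add_pos_pos)
  have csv: "0 \<le> 2 * c * sv" using c0 sv0 by simp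
  have rs: "r = sqrt (2 * c * sv)" unfolding r_def sv_def by simp
  have r2: "r\<^sup>2 = 2 * c * sv" unfolding rs using csv by simp
  have r0: "0 \<le> r" unfolding rs using csv by simp
  define \<theta> where "\<theta> = r / sv"
  have th0: "0 \<le> \<theta>" unfolding \<theta>_def using r0 sv0 by simp
  define L where "L = (\<lambda>a j. if a = b \<and> lo k1 \<le> j \<and> j < hi k1 then \<theta> / N1
      else if a = astar \<and> lo k2 \<le> j \<and> j < hi k2 then - \<theta> / N2 else 0)"
  have Im[measurable]: "\<And>u. 1 \<le> u \<Longrightarrow> I u \<in> measurable M (count_space UNIV)" using I_M by blast
  have [measurable]: "\<And>n a. (\<lambda>\<omega>. cnt (\<lambda>u. I u \<omega>) n a) \<in> measurable M (count_space UNIV)"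
    using I_M by (intro meas_cnt) auto
  have [measurable]: "\<And>n a k. (\<lambda>\<omega>. Ssum (\<lambda>u. I u \<omega>) (\<lambda>u. X u \<omega>) n a k) \<in> borel_measurable M"
    using I_M X_M by (intro meas_Ssum) auto
  have Fm: "\<And>n. F n \<in> sets M" unfolding F_def by measurable
  have key: "\<And>n \<omega>. \<omega> \<in> F n \<Longrightarrow> ennreal (exp c) \<le> W L n \<omega>"
  proof -
    fix n \<omega> assume \<omega>: "\<omega> \<in> F n"
    define i where "i = (\<lambda>u. I u \<omega>)"
    define x where "x = (\<lambda>u. X u \<omega>)"
    define sel1 where "sel1 = (\<lambda>t. i t = b \<and> lo k1 \<le> cnt i t b \<and> cnt i t b < hi k1)"
    define sel2 where "sel2 = (\<lambda>t. i t = astar \<and> lo k2 \<le> cnt i t astar \<and> cnt i t astar < hi k2)"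
    have h1: "hi k1 \<le> cnt i n b" and h2: "hi k2 \<le> cnt i n astar"
      and hr: "r \<le> (Ssum i x n b k1 / N1 - \<mu> b) - (Ssum i x n astar k2 / N2 - \<mu> astar)"
      using \<omega> unfolding F_def i_def x_def by auto
    have C1: "(\<Sum>t\<in>{1..<n}. if sel1 t then 1 else 0) = N1"
      unfolding sel1_def N1_def using count_real[OF h1] .
    have C2: "(\<Sum>t\<in>{1..<n}. if sel2 t then 1 else 0) = N2"
      unfolding sel2_def N2_def using count_real[OF h2] .
    have S1: "(\<Sum>t\<in>{1..<n}. if sel1 t then x t else 0) = Ssum i x n b k1"
      unfolding sel1_def Ssum_def ..
    have S2: "(\<Sum>t\<in>{1..<n}. if sel2 t then x t else 0) = Ssum i x n astar k2"
      unfolding sel2_def Ssum_def ..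
    have pt: "\<And>t. lam L \<omega> t * (X t \<omega> - \<mu> (I t \<omega>)) - (lam L \<omega> t)\<^sup>2 / 2
        = \<theta> / N1 * ((if sel1 t then x t else 0) - \<mu> b * (if sel1 t then 1 else 0))
          - \<theta>\<^sup>2 / (2 * N1\<^sup>2) * (if sel1 t then 1 else 0)
          - \<theta> / N2 * ((if sel2 t then x t else 0) - \<mu> astar * (if sel2 t then 1 else 0))
          - \<theta>\<^sup>2 / (2 * N2\<^sup>2) * (if sel2 t then 1 else 0)"
    proof -
      fix t
      show "?thesis t"
      proof (cases "sel1 t")
        case True
        then have "\<not> sel2 t" unfolding sel1_def sel2_def using b by auto
        moreover have "lam L \<omega> t = \<theta> / N1" using True unfolding lam_def L_def sel1_def i_def by auto
        moreover have "I t \<omega> = b" using True unfolding sel1_def i_def by simp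
        ultimately show ?thesis using True unfolding x_def by (simp add: power2_eq_square field_simps)
      next
        case F1: False
        show ?thesis
        proof (cases "sel2 t")
          case True
          moreover have "lam L \<omega> t = - \<theta> / N2" using True b unfolding lam_def L_def sel2_def i_def by auto
          moreover have "I t \<omega> = astar" using True unfolding sel2_def i_def by simp
          ultimately show ?thesis using F1 unfolding x_def by (simp add: power2_eq_square field_simps)
        next
          case False
          have "lam L \<omega> t = 0" using F1 False unfolding lam_def L_def sel1_def sel2_def i_def by auto
          then show ?thesis using F1 False by simp
        qed
      qed
    qed
    have "(\<Sum>t\<in>{1..<n}. lam L \<omega> t * (X t \<omega> - \<mu> (I t \<omega>)) - (lam L \<omega> t)\<^sup>2 / 2)
        = \<theta> / N1 * (Ssum i x n b k1 - \<mu> b * N1) - \<theta>\<^sup>2 / (2 * N1\<^sup>2) * N1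
          - \<theta> / N2 * (Ssum i x n astar k2 - \<mu> astar * N2) - \<theta>\<^sup>2 / (2 * N2\<^sup>2) * N2"
    proof -
      have "(\<Sum>t\<in>{1..<n}. lam L \<omega> t * (X t \<omega> - \<mu> (I t \<omega>)) - (lam L \<omega> t)\<^sup>2 / 2)
        = (\<Sum>t\<in>{1..<n}. \<theta> / N1 * ((if sel1 t then x t else 0) - \<mu> b * (if sel1 t then 1 else 0))
          - \<theta>\<^sup>2 / (2 * N1\<^sup>2) * (if sel1 t then 1 else 0)
          - \<theta> / N2 * ((if sel2 t then x t else 0) - \<mu> astar * (if sel2 t then 1 else 0))
          - \<theta>\<^sup>2 / (2 * N2\<^sup>2) * (if sel2 t then 1 else 0))"
        by (rule sum.cong[OF refl pt])
      also have "\<dots> = \<theta> / N1 * ((\<Sum>t\<in>{1..<n}. if sel1 t then x t else 0) - \<mu> b * (\<Sum>t\<in>{1..<n}. if sel1 t then 1 else 0))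
          - \<theta>\<^sup>2 / (2 * N1\<^sup>2) * (\<Sum>t\<in>{1..<n}. if sel1 t then 1 else 0)
          - \<theta> / N2 * ((\<Sum>t\<in>{1..<n}. if sel2 t then x t else 0) - \<mu> astar * (\<Sum>t\<in>{1..<n}. if sel2 t then 1 else 0))
          - \<theta>\<^sup>2 / (2 * N2\<^sup>2) * (\<Sum>t\<in>{1..<n}. if sel2 t then 1 else 0)"
        by (rule lin_sum)
      finally show ?thesis unfolding C1 C2 S1 S2 .
    qed
    also have "\<dots> = \<theta> * ((Ssum i x n b k1 / N1 - \<mu> b) - (Ssum i x n astar k2 / N2 - \<mu> astar)) - \<theta>\<^sup>2 * sv / 2"
      unfolding sv_def using N1 N2 by (simp add: field_simps power2_eq_square)
    also have "\<dots> \<ge> \<theta> * r - \<theta>\<^sup>2 * sv / 2"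
      using hr th0 by (simp add: mult_left_mono)
    finally have ge: "\<theta> * r - \<theta>\<^sup>2 * sv / 2 \<le> (\<Sum>t\<in>{1..<n}. lam L \<omega> t * (X t \<omega> - \<mu> (I t \<omega>)) - (lam L \<omega> t)\<^sup>2 / 2)" .
    have "\<theta> * r - \<theta>\<^sup>2 * sv / 2 = r\<^sup>2 / (2 * sv)"
      unfolding \<theta>_def using sv0 by (simp add: field_simps power2_eq_square)
    also have "\<dots> = c" using r2 sv0 by simp
    finally have "c \<le> (\<Sum>t\<in>{1..<n}. lam L \<omega> t * (X t \<omega> - \<mu> (I t \<omega>)) - (lam L \<omega> t)\<^sup>2 / 2)" using ge by simp
    then show "ennreal (exp c) \<le> W L n \<omega>" unfolding W_def by (simp add: ennreal_leI)
  qed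
  have Fb: "\<And>n. measure M (F n) \<le> exp (- c)"
  proof -
    fix n
    have "(\<integral>\<^sup>+\<omega>. ennreal (exp c) * indicator (F n) \<omega> \<partial>M) \<le> (\<integral>\<^sup>+\<omega>. W L n \<omega> \<partial>M)"
      using key by (intro nn_integral_mono) (auto simp: indicator_def)
    also have "\<dots> \<le> 1" by (rule W_le1)
    finally have "ennreal (exp c) * emeasure M (F n) \<le> 1"
      using nn_integral_cmult_indicator[OF Fm] by simp
    then have "ennreal (exp c * measure M (F n)) \<le> 1"
      by (simp add: P.emeasure_eq_measure ennreal_mult)
    then have "exp c * measure M (F n) \<le> 1" by (simp add: ennreal_le_1)
    then have "measure M (F n) \<le> 1 / exp c" by (simp add: field_simps mult.commute)
    then show "measure M (F n) \<le> exp (- c)" by (simp add: exp_minus inverse_eq_divide)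
  qed
  have inc: "incseq F"
  proof (rule incseq_SucI)
    fix n show "F n \<subseteq> F (Suc n)"
    proof
      fix \<omega> assume \<omega>: "\<omega> \<in> F n"
      then have h1: "hi k1 \<le> cnt (\<lambda>u. I u \<omega>) n b" and h2: "hi k2 \<le> cnt (\<lambda>u. I u \<omega>) n astar"
        unfolding F_def by auto
      have "cnt (\<lambda>u. I u \<omega>) n b \<le> cnt (\<lambda>u. I u \<omega>) (Suc n) b"
        "cnt (\<lambda>u. I u \<omega>) n astar \<le> cnt (\<lambda>u. I u \<omega>) (Suc n) astar" by (simp_all add: cnt_mono)
      then show "\<omega> \<in> F (Suc n)" using \<omega> h1 h2 Ssum_stable[OF h1] Ssum_stable[OF h2]
        unfolding F_def by auto
    qed
  qed
  have lim: "(\<lambda>n. measure M (F n)) \<longlonglongrightarrow> measure M (\<Union>n. F n)"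
    using Fm inc by (intro P.finite_Lim_measure_incseq) auto
  have "measure M (\<Union>n. F n) \<le> exp (- c)"
    by (rule LIMSEQ_le_const2[OF lim]) (use Fb in auto)
  moreover have "(\<Union>n. F n) \<in> sets M" using Fm by auto
  ultimately show ?thesis by simp
qed

end

context L4 begin

definition E :: "nat \<Rightarrow> nat \<Rightarrow> nat \<Rightarrow> 'w set" where
  "E b k1 k2 = (\<Union>n. {\<omega> \<in> space M.
          hi k1 \<le> cnt (\<lambda>u. I u \<omega>) n b \<and>
          hi k2 \<le> cnt (\<lambda>u. I u \<omega>) n astar \<and>
          sqrt (2 * c_thr K s (k1 * k2) (Nn k1) (Nn k2) \<delta> * (1 / real (Nn k1) + 1 / real (Nn k2)))
          \<le> Ssum (\<lambda>u. I u \<omega>) (\<lambda>u. X u \<omega>) n b k1 / real (Nn k1) - \<mu> b -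
            (Ssum (\<lambda>u. I u \<omega>) (\<lambda>u. X u \<omega>) n astar k2 / real (Nn k2) - \<mu> astar)})"

lemma E_bound:
  assumes b: "b < K" "b \<noteq> astar" and k1: "1 \<le> k1" and k2: "1 \<le> k2"
  shows "E b k1 k2 \<in> sets M \<and> measure M (E b k1 k2) \<le> \<delta> / ((real K - 1) * (zeta_r s)\<^sup>2 * real (k1 * k2) powr s)"
proof -
  have K2: "2 \<le> K" using b best(1) by auto
  have k12: "1 \<le> k1 * k2" using k1 k2 by simp
  have "exp (- c_thr K s (k1 * k2) (Nn k1) (Nn k2) \<delta>) \<le> \<delta> / ((real K - 1) * (zeta_r s)\<^sup>2 * real (k1 * k2) powr s)"
    using thr_bound[OF K2 d0 d1 s1 k12 Nn_ge1[OF k1] Nn_ge1[OF k2]] by blast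
  then show ?thesis using event_bound[OF b k1 k2] unfolding E_def by auto
qed

lemma union_bound:
  assumes A: "\<And>i. A i \<in> sets M" and f: "\<And>i. measure M (A i) \<le> f i" and sf: "summable f"
  shows "measure M (\<Union>i. A i) \<le> suminf f"
proof -
  have sm: "summable (\<lambda>i. measure M (A i))"
    by (rule summable_comparison_test[OF _ sf]) (use f in auto)
  have "measure M (\<Union>i. A i) \<le> (\<Sum>i. measure M (A i))"
    using A sm by (intro P.finite_measure_subadditive_countably) auto
  also have "\<dots> \<le> suminf f" using sm sf f by (intro suminf_le) auto
  finally show ?thesis .
qed

lemma b_bound:
  assumes b: "b < K" "b \<noteq> astar"
  shows "(\<Union>n1. \<Union>n2. E b (Suc n1) (Suc n2)) \<in> sets M \<and>
         measure M (\<Union>n1. \<Union>n2. E b (Suc n1) (Suc n2)) \<le> \<delta> / (real K - 1)"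
proof -
  define z where "z = zeta_r s"
  define p where "p = (\<lambda>n::nat. 1 / real (Suc n) powr s)"
  have zs: "p sums z" unfolding p_def z_def zeta_r_def using zeta_summable[OF s1] by (rule summable_sums)
  have sp: "summable p" using zs by (rule sums_summable)
  have z1: "1 \<le> z" unfolding z_def using zeta_ge1[OF s1] .
  define C where "C = \<delta> / ((real K - 1) * z\<^sup>2)"
  have Em: "\<And>n1 n2. E b (Suc n1) (Suc n2) \<in> sets M" using E_bound[OF b] by simp
  have fb: "\<And>n1 n2. measure M (E b (Suc n1) (Suc n2)) \<le> C * p n1 * p n2"
  proof -
    fix n1 n2
    have "real (Suc n1 * Suc n2) powr s = (real (Suc n1) * real (Suc n2)) powr s"
      by (simp only: of_nat_mult)
    also have "\<dots> = real (Suc n1) powr s * real (Suc n2) powr s"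
      by (rule powr_mult)
    finally have "real (Suc n1 * Suc n2) powr s = real (Suc n1) powr s * real (Suc n2) powr s" .
    then have "\<delta> / ((real K - 1) * (zeta_r s)\<^sup>2 * real (Suc n1 * Suc n2) powr s) = C * p n1 * p n2"
      unfolding C_def p_def z_def by simp
    then show "measure M (E b (Suc n1) (Suc n2)) \<le> C * p n1 * p n2"
      using E_bound[OF b, of "Suc n1" "Suc n2"] by simp
  qed
  have inner: "\<And>n1. measure M (\<Union>n2. E b (Suc n1) (Suc n2)) \<le> C * p n1 * z"
  proof -
    fix n1
    have "summable (\<lambda>n2. C * p n1 * p n2)" using sp by (rule summable_mult)
    then have "measure M (\<Union>n2. E b (Suc n1) (Suc n2)) \<le> (\<Sum>n2. C * p n1 * p n2)"
      using Em fb by (intro union_bound) auto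
    also have "(\<Sum>n2. C * p n1 * p n2) = C * p n1 * z" using sums_mult[OF zs, of "C * p n1"] sums_unique by metis
    finally show "measure M (\<Union>n2. E b (Suc n1) (Suc n2)) \<le> C * p n1 * z" .
  qed
  have Em2: "\<And>n1. (\<Union>n2. E b (Suc n1) (Suc n2)) \<in> sets M" using Em by auto
  have "summable (\<lambda>n1. C * z * p n1)" using sp by (rule summable_mult)
  then have "measure M (\<Union>n1. \<Union>n2. E b (Suc n1) (Suc n2)) \<le> (\<Sum>n1. C * z * p n1)"
    using Em2 inner by (intro union_bound) (auto simp: ac_simps)
  also have "(\<Sum>n1. C * z * p n1) = C * z * z" using sums_mult[OF zs, of "C * z"] sums_unique by metis
  also have "C * z * z = \<delta> / (real K - 1)" unfolding C_def using z1 by (simp add: power2_eq_square)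
  finally show ?thesis using Em2 by auto
qed

lemma SW_subset:
  "{\<omega>\<in>space M. stops_wrong K s \<delta> astar (\<lambda>n. I n \<omega>) (\<lambda>n. X n \<omega>)}
     \<subseteq> (\<Union>b\<in>{..<K} - {astar}. \<Union>n1. \<Union>n2. E b (Suc n1) (Suc n2))"
proof
  fix \<omega> assume \<omega>: "\<omega> \<in> {\<omega>\<in>space M. stops_wrong K s \<delta> astar (\<lambda>n. I n \<omega>) (\<lambda>n. X n \<omega>)}"
  define i where "i = (\<lambda>n. I n \<omega>)"
  define x where "x = (\<lambda>n. X n \<omega>)"
  have sp: "\<omega> \<in> space M" using \<omega> by simp
  have bij: "bij_betw i {1..K} {..<K}" using init sp unfolding i_def by auto
  have K0: "0 < K" using best(1) by simp
  have st: "stops2 K s \<delta> astar i x" using \<omega> stops_eq[OF bij K0] unfolding i_def x_def by simp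
  define n0 where "n0 = (LEAST n. glr2 K s \<delta> i x n)"
  have g: "glr2 K s \<delta> i x n0" using st unfolding stops2_def n0_def by (auto intro: LeastI_ex)
  define b where "b = ahat2 K i x n0"
  have bA: "b \<noteq> astar" using st unfolding stops2_def b_def n0_def by simp
  have bK: "b < K" and bmax: "\<forall>b'<K. cm i x n0 b' \<le> cm i x n0 b" using ahat2_prop[OF K0] unfolding b_def by auto
  have n0: "K + 1 \<le> n0" using g unfolding glr2_def by simp
  define k1 where "k1 = phi (cnt i n0 b)"
  define k2 where "k2 = phi (cnt i n0 astar)"
  have k1: "1 \<le> k1" and k2: "1 \<le> k2" unfolding k1_def k2_def using phi_facts by auto
  define N1 where "N1 = real (Nn k1)"
  define N2 where "N2 = real (Nn k2)"
  have N1: "1 \<le> N1" and N2: "1 \<le> N2" unfolding N1_def N2_def using Nn_ge1 k1 k2 by auto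
  define c where "c = c_thr K s (k1 * k2) (Nn k1) (Nn k2) \<delta>"
  define sv where "sv = 1 / N1 + 1 / N2"
  have sv0: "0 < sv" unfolding sv_def using N1 N2 by (simp add: add_pos_pos)
  have ineq: "(cm i x n0 b - cm i x n0 astar)\<^sup>2 / sv \<ge> 2 * c"
    using g bA best(1) unfolding glr2_def Let_def b_def[symmetric] c_def k1_def k2_def sv_def N1_def N2_def
    by auto
  have cmb: "cm i x n0 b = Ssum i x n0 b k1 / N1" unfolding cm_def k1_def N1_def ..
  have cma: "cm i x n0 astar = Ssum i x n0 astar k2 / N2" unfolding cm_def k2_def N2_def ..
  define D where "D = cm i x n0 b - cm i x n0 astar"
  have D0: "0 \<le> D" unfolding D_def using bmax best(1) by auto
  have "2 * c * sv \<le> D\<^sup>2" using ineq sv0 unfolding D_def by (simp add: pos_le_divide_eq)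
  then have "sqrt (2 * c * sv) \<le> sqrt (D\<^sup>2)" by (rule real_sqrt_le_mono)
  also have "\<dots> = D" using D0 by simp
  also have "D \<le> (Ssum i x n0 b k1 / N1 - \<mu> b) - (Ssum i x n0 astar k2 / N2 - \<mu> astar)"
    unfolding D_def cmb cma using best(2) bK bA by auto
  finally have Q: "sqrt (2 * c * sv) \<le> (Ssum i x n0 b k1 / N1 - \<mu> b) - (Ssum i x n0 astar k2 / N2 - \<mu> astar)" .
  have h1: "hi k1 \<le> cnt i n0 b" unfolding k1_def using phi_hi cnt_pos[OF bij bK n0] by blast
  have h2: "hi k2 \<le> cnt i n0 astar" unfolding k2_def using phi_hi cnt_pos[OF bij best(1) n0] by blast
  have "\<omega> \<in> E b k1 k2"
    unfolding E_def using sp h1 h2 Q unfolding i_def x_def c_def sv_def N1_def N2_def by blast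
  moreover have "k1 = Suc (k1 - 1)" "k2 = Suc (k2 - 1)" using k1 k2 by auto
  ultimately have "\<omega> \<in> E b (Suc (k1 - 1)) (Suc (k2 - 1))" by simp
  then show "\<omega> \<in> (\<Union>b\<in>{..<K} - {astar}. \<Union>n1. \<Union>n2. E b (Suc n1) (Suc n2))"
    using bK bA by blast
qed

lemma main:
  "{\<omega>\<in>space M. stops_wrong K s \<delta> astar (\<lambda>n. I n \<omega>) (\<lambda>n. X n \<omega>)} \<in> sets M
   \<and> measure M {\<omega>\<in>space M. stops_wrong K s \<delta> astar (\<lambda>n. I n \<omega>) (\<lambda>n. X n \<omega>)} \<le> \<delta>"
proof -
  have K0: "0 < K" using best(1) by simp
  have eqs: "{\<omega>\<in>space M. stops_wrong K s \<delta> astar (\<lambda>n. I n \<omega>) (\<lambda>n. X n \<omega>)}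
      = {\<omega>\<in>space M. stops2 K s \<delta> astar (\<lambda>n. I n \<omega>) (\<lambda>n. X n \<omega>)}"
    using stops_eq[OF _ K0] init by auto
  have meas: "{\<omega>\<in>space M. stops_wrong K s \<delta> astar (\<lambda>n. I n \<omega>) (\<lambda>n. X n \<omega>)} \<in> sets M"
    unfolding eqs by (rule meas_stops2) (use I_M X_M in auto)
  define B where "B = {..<K} - {astar}"
  define U where "U = (\<lambda>b. \<Union>n1. \<Union>n2. E b (Suc n1) (Suc n2))"
  have Um: "U ` B \<subseteq> sets M" using b_bound unfolding U_def B_def by auto
  have "measure M {\<omega>\<in>space M. stops_wrong K s \<delta> astar (\<lambda>n. I n \<omega>) (\<lambda>n. X n \<omega>)} \<le> measure M (\<Union>b\<in>B. U b)"
    using SW_subset Um unfolding U_def B_def by (intro P.finite_measure_mono) auto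
  also have "\<dots> \<le> (\<Sum>b\<in>B. measure M (U b))"
    using Um by (intro P.finite_measure_subadditive_finite) (auto simp: B_def)
  also have "\<dots> \<le> (\<Sum>b\<in>B. \<delta> / (real K - 1))"
    using b_bound unfolding U_def B_def by (intro sum_mono) auto
  also have "\<dots> \<le> \<delta>"
  proof -
    have cB: "card B = K - 1" unfolding B_def using best(1) by simp
    show ?thesis
    proof (cases "K = 1")
      case True then show ?thesis using cB d0 by simp
    next
      case False
      then have "real (K - 1) = real K - 1" using K0 by simp
      then show ?thesis using cB False K0 by simp
    qed
  qed
  finally show ?thesis using meas by simp
qed

end

theorem lemma4:
  fixes M :: "'w measure" and G :: "nat \<Rightarrow> 'w measure"
    and I :: "nat \<Rightarrow> 'w \<Rightarrow> nat" and X :: "nat \<Rightarrow> 'w \<Rightarrow> real"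
    and \<nu> :: "nat \<Rightarrow> real measure" and \<mu> :: "nat \<Rightarrow> real"
    and K astar :: nat and \<delta> s :: real
  assumes "prob_space M"
    and "0 < \<delta>" and "\<delta> < 1" and "1 < s"
    and arms: "\<forall>a<K. prob_space (\<nu> a) \<and> sets (\<nu> a) = sets borel \<and> subgaussian1 (\<nu> a)
                  \<and> \<mu> a = (\<integral>x. x \<partial>\<nu> a)"
    and best: "astar < K" "\<forall>b<K. b \<noteq> astar \<longrightarrow> \<mu> b < \<mu> astar"
    and filt: "\<forall>n. subalgebra M (G n)" "\<forall>n. sets (G n) \<subseteq> sets (G (Suc n))"
    and adapted: "\<forall>n\<ge>1. I n \<in> measurable (G n) (count_space UNIV)"
                 "\<forall>n\<ge>1. X n \<in> borel_measurable (G (Suc n))"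
    and range: "\<forall>n\<ge>1. \<forall>\<omega>\<in>space M. I n \<omega> < K"
    and init: "\<forall>\<omega>\<in>space M. bij_betw (\<lambda>t. I t \<omega>) {1..K} {..<K}"
    and obs: "\<forall>n\<ge>1. \<forall>A\<in>sets (G n). \<forall>B\<in>sets borel. \<forall>a<K.
               measure M (A \<inter> {\<omega>\<in>space M. I n \<omega> = a \<and> X n \<omega> \<in> B})
                 = measure M (A \<inter> {\<omega>\<in>space M. I n \<omega> = a}) * measure (\<nu> a) B"
  shows "{\<omega>\<in>space M. stops_wrong K s \<delta> astar (\<lambda>n. I n \<omega>) (\<lambda>n. X n \<omega>)} \<in> sets M
       \<and> measure M {\<omega>\<in>space M. stops_wrong K s \<delta> astar (\<lambda>n. I n \<omega>) (\<lambda>n. X n \<omega>)} \<le> \<delta>"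
proof -
  have "L4 M G I X \<nu> \<mu> K astar \<delta> s" by (rule L4.intro[OF assms])
  then show ?thesis by (rule L4.main)
qed

end
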